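(* Let $$F(x)=\sum_{n\ge0}t^n\sum_{(P,Q)\in\mathcal{I}_n}x^{\mathrm{contact}(P)},\qquad G(x,y)\equiv G(t,x,y,w)=\sum_{n\ge0}t^n\sum_{(P,Q)\in\mathcal{I}_n}\sum_{i=0}^{2n}w^{P(i)}x^{\mathrm{contact}_{<i}(P)}y^{\mathrm{contact}_{\ge i}(P)}.$$ Then $$\begin{aligned}G(x,y)={}&F(y)+txw\frac{G(1,y)-G(1,1)}{y-1}F(y)+tx\frac{F(y)-yF(1)}{y-1}F(y)\\&+t\frac{x^2}{y}\,\frac{G(x,y)-\frac{y}{x}F(x)-G(1,y)+yF(1)}{x-1}F(y)+tx\frac{F(x)-F(1)}{x-1}G(x,y).\end{aligned}$$
   Context: A Dyck path of size $n$ is a lattice path from $(0,0)$ to $(2n,0)$ with $n$ up-steps $(1,1)$ and $n$ down-steps $(1,-1)$ never going below height $0$; $P(i)$ is the height of $P$ at abscissa $i$. A contact of a path is a vertex on the $x$-axis (including both endpoints); $\mathrm{contact}(P)$ is their number, and $\mathrm{contact}_{<i}(P)$, $\mathrm{contact}_{\ge i}(P)$ are the numbers of contacts with abscissa $<i$, resp. $\ge i$. The Tamari order on Dyck paths of size $n$ is the reflexive transitive closure of the relation: if $P$ has a down-step $d$ immediately followed by an up-step and $\mathfrak{e}$ is the shortest excursion following $d$ (a subpath staying strictly above its starting height except at its last point), the path obtained by exchanging $d$ and $\mathfrak{e}$ is larger than $P$. $\mathcal{I}_n$ is the set of pairs $(P,Q)$ of Dyck paths of size $n$ with $P\le Q$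 ($P$ is the lower path). Series are formal power series in $t$. *)

theory Defs
  imports Complex_Main "HOL-Computational_Algebra.Formal_Power_Series"
begin

text \<open>Dyck paths are encoded as lists of steps: True = up-step (1,1), False = down-step (1,-1).\<close>

definition step_val :: "bool \<Rightarrow> int" where
  "step_val s = (if s then 1 else -1)"

definition height :: "bool list \<Rightarrow> nat \<Rightarrow> int" where
  "height P i = (\<Sum>s\<leftarrow>take i P. step_val s)"

definition dyck_path :: "nat \<Rightarrow> bool list \<Rightarrow> bool" where
  "dyck_path n P \<longleftrightarrow> length P = 2 * n \<and> count_list P True = n \<and> count_list P False = n
     \<and> (\<forall>i \<le> length P. height P i \<ge> 0)"

definition contact :: "bool list \<Rightarrow> nat" where
  "contact P = card {j. j \<le> length P \<and> height P j = 0}"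

definition contact_lt :: "bool list \<Rightarrow> nat \<Rightarrow> nat" where
  "contact_lt P i = card {j. j < i \<and> j \<le> length P \<and> height P j = 0}"

definition contact_ge :: "bool list \<Rightarrow> nat \<Rightarrow> nat" where
  "contact_ge P i = card {j. i \<le> j \<and> j \<le> length P \<and> height P j = 0}"

text \<open>An excursion: nonempty subpath staying strictly above its starting height except at its
  last point, where it returns to the starting height. (It is then automatically the shortest
  excursion starting at its starting point, being unique.)\<close>
definition excursion :: "bool list \<Rightarrow> bool" where
  "excursion e \<longleftrightarrow> e \<noteq> [] \<and> height e (length e) = 0 \<and>
     (\<forall>i. 0 < i \<and> i < length e \<longrightarrow> height e i > 0)"

definition tamari_step :: "bool list \<Rightarrow> bool list \<Rightarrow> bool" where
  "tamari_step P Q \<longleftrightarrow> (\<exists>A e B. P = A @ False # e @ B \<and> excursion e \<and> Q = A @ e @ False # B)"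

definition tamari_le :: "nat \<Rightarrow> bool list \<Rightarrow> bool list \<Rightarrow> bool" where
  "tamari_le n P Q \<longleftrightarrow> dyck_path n P \<and> dyck_path n Q \<and> tamari_step\<^sup>*\<^sup>* P Q"

definition intervals :: "nat \<Rightarrow> (bool list \<times> bool list) set" where
  "intervals n = {(P, Q). tamari_le n P Q}"

text \<open>Generating functions, with the catalytic variables specialised to real numbers.\<close>
definition F_gf :: "real \<Rightarrow> real fps" where
  "F_gf x = Abs_fps (\<lambda>n. \<Sum>(P, Q)\<in>intervals n. x ^ contact P)"

definition G_gf :: "real \<Rightarrow> real \<Rightarrow> real \<Rightarrow> real fps" where
  "G_gf w x y = Abs_fps (\<lambda>n. \<Sum>(P, Q)\<in>intervals n. \<Sum>i = 0..2*n.
      w ^ nat (height P i) * x ^ contact_lt P i * y ^ contact_ge P i)"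

end

theory Submission
  imports Defs
begin

unbundle fps_syntax


lemma height_0[simp]: "height P 0 = 0" by (simp add: height_def)

lemma height_append: "height (A @ B) i =
  (if i \<le> length A then height A i else height A (length A) + height B (i - length A))"
  by (simp add: height_def)

lemma height_Cons_Suc[simp]: "height (a # P) (Suc i) = step_val a + height P i"
  by (simp add: height_def)

lemma height_ge_len: "length P \<le> i \<Longrightarrow> height P i = height P (length P)"
  by (simp add: height_def)

lemma height_Suc: "height P (Suc i) = height P i + (if i < length P then step_val (P ! i) else 0)"
  by (simp add: height_def take_Suc_conv_app_nth)

lemma height_Suc_ge: "height P (Suc i) \<ge> height P i - 1"
  by (simp add: height_Suc step_val_def)

lemma height_Suc_le: "height P (Suc i) \<le> height P i + 1"
  by (simp add: height_Suc step_val_def)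

lemma step_val_simps[simp]: "step_val True = 1" "step_val False = -1"
  by (auto simp: step_val_def)

lemma sum_steps: "(\<Sum>s\<leftarrow>P. step_val s) = int (count_list P True) - int (count_list P False)"
proof (induction P)
  case Nil then show ?case by simp
next
  case (Cons a P) then show ?case by (cases a) simp_all
qed

lemma height_full: "height P (length P) = int (count_list P True) - int (count_list P False)"
  unfolding height_def using sum_steps by simp

lemma count_tf: "count_list P True + count_list P False = length P"
proof (induction P)
  case Nil then show ?case by simp
next
  case (Cons a P) then show ?case by (cases a) simp_all
qed

definition nn :: "bool list \<Rightarrow> bool" where
  "nn P \<longleftrightarrow> (\<forall>i \<le> length P. 0 \<le> height P i)"

definition bal :: "bool list \<Rightarrow> bool" where
  "bal P \<longleftrightarrow> nn P \<and> height P (length P) = 0"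

lemma nn_all: "nn P \<Longrightarrow> 0 \<le> height P i"
proof -
  assume h: "nn P"
  show ?thesis
  proof (cases "i \<le> length P")
    case True then show ?thesis using h unfolding nn_def by blast
  next
    case False then have "height P i = height P (length P)" by (intro height_ge_len) simp
    then show ?thesis using h unfolding nn_def by simp
  qed
qed

lemma dyck_bal: "dyck_path n P \<longleftrightarrow> bal P \<and> length P = 2 * n"
proof -
  have a: "height P (length P) = 0 \<and> length P = 2 * n \<longleftrightarrow> length P = 2 * n \<and> count_list P True = n \<and> count_list P False = n"
    using height_full[of P] count_tf[of P] by linarith
  show ?thesis unfolding dyck_path_def bal_def nn_def using a by blast
qed


section \<open>Tamari steps\<close>

lemma ts_len: "tamari_step P Q \<Longrightarrow> length Q = length P"
  unfolding tamari_step_def by auto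

lemma ts_len_star: "tamari_step\<^sup>*\<^sup>* P Q \<Longrightarrow> length Q = length P"
  by (induction rule: rtranclp_induct) (auto dest: ts_len)

lemma ts_height_gen:
  assumes "excursion e"
  shows "height (A @ False # e @ B) i \<le> height (A @ e @ False # B) i"
    and "i \<le> length A \<or> length A + length e + 1 \<le> i \<Longrightarrow>
         height (A @ False # e @ B) i = height (A @ e @ False # B) i"
proof -
  have e0: "height e (length e) = 0" and ene: "e \<noteq> []"
    using assms unfolding excursion_def by auto
  have key: "height (False # e @ B) k \<le> height (e @ False # B) k
     \<and> (length e + 1 \<le> k \<longrightarrow> height (False # e @ B) k = height (e @ False # B) k)" for k
  proof (cases k)
    case 0 then show ?thesis by simp
  next
    case (Suc k')
    show ?thesis
    proof (cases "k' < length e")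
      case True
      have "height e (Suc k') \<ge> height e k' - 1" by (rule height_Suc_ge)
      with True Suc show ?thesis by (auto simp: height_append)
    next
      case False
      then obtain m where m: "k' = length e + m" by (metis le_add_diff_inverse not_less)
      show ?thesis using Suc e0 m
        by (cases m) (auto simp: height_append)
    qed
  qed
  show "height (A @ False # e @ B) i \<le> height (A @ e @ False # B) i"
    using key[of "i - length A"] by (auto simp: height_append)
  show "i \<le> length A \<or> length A + length e + 1 \<le> i \<Longrightarrow>
         height (A @ False # e @ B) i = height (A @ e @ False # B) i"
    using key[of "i - length A"] by (auto simp: height_append)
qed

lemma ts_height: "tamari_step P Q \<Longrightarrow> height P i \<le> height Q i"
  unfolding tamari_step_def using ts_height_gen(1) by blast

lemma ts_height_star: "tamari_step\<^sup>*\<^sup>* P Q \<Longrightarrow> height P i \<le> height Q i"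
  by (induction rule: rtranclp_induct) (auto dest: ts_height[of _ _ i])

lemma ts_nn_star: "tamari_step\<^sup>*\<^sup>* P Q \<Longrightarrow> nn P \<Longrightarrow> nn Q"
  unfolding nn_def proof (intro allI impI)
  fix i assume "tamari_step\<^sup>*\<^sup>* P Q" "\<forall>i\<le>length P. 0 \<le> height P i" "i \<le> length Q"
  then show "0 \<le> height Q i" using ts_height_star[of P Q i] ts_len_star[of P Q] by auto
qed

lemma ts_final_star: "tamari_step\<^sup>*\<^sup>* P Q \<Longrightarrow> height Q (length Q) = height P (length P)"
proof (induction rule: rtranclp_induct)
  case base then show ?case by simp
next
  case (step Q R)
  then obtain A e B where "Q = A @ False # e @ B" "excursion e" "R = A @ e @ False # B"
    unfolding tamari_step_def by blast
  with ts_height_gen(2)[where e=e and A=A and B=B and i="length R"] step show ?case by (simp add: ts_len)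
qed

lemma ts_bal_star: "tamari_step\<^sup>*\<^sup>* P Q \<Longrightarrow> bal P \<Longrightarrow> bal Q"
  unfolding bal_def using ts_nn_star ts_final_star by simp

lemma ts_cong: "tamari_step S S' \<Longrightarrow> tamari_step (A @ S @ B) (A @ S' @ B)"
proof -
  assume "tamari_step S S'"
  then obtain A' e B' where h: "S = A' @ False # e @ B'" "excursion e" "S' = A' @ e @ False # B'"
    unfolding tamari_step_def by blast
  show ?thesis unfolding tamari_step_def
    by (rule exI[where x="A @ A'"], rule exI[where x=e], rule exI[where x="B' @ B"]) (simp add: h)
qed

lemma ts_cong_star: "tamari_step\<^sup>*\<^sup>* S S' \<Longrightarrow> tamari_step\<^sup>*\<^sup>* (A @ S @ B) (A @ S' @ B)"
proof (induction rule: rtranclp_induct)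
  case base then show ?case by simp
next
  case (step y z) show ?case by (rule rtranclp.rtrancl_into_rtrancl[OF step.IH ts_cong[OF step.hyps(2)]])
qed


lemma app_split: "xs @ ys = us @ vs \<Longrightarrow> length xs \<le> length us \<Longrightarrow> \<exists>m. us = xs @ m \<and> ys = m @ vs"
proof -
  assume h: "xs @ ys = us @ vs" "length xs \<le> length us"
  have "take (length xs) (xs @ ys) = take (length xs) (us @ vs)" using h by simp
  then have t: "xs = take (length xs) us" using h(2) by simp
  have "drop (length xs) (xs @ ys) = drop (length xs) (us @ vs)" using h by simp
  then have d: "ys = drop (length xs) us @ vs" using h(2) by simp
  show ?thesis using t d by (metis append_take_drop_id)
qed

lemma app_splitF: "xs @ False # ys = us @ False # vs \<Longrightarrow> length xs < length us \<Longrightarrow>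
   \<exists>m. us = xs @ False # m \<and> ys = m @ False # vs"
proof -
  assume h: "xs @ False # ys = us @ False # vs" "length xs < length us"
  then obtain m where m: "us = xs @ m" "False # ys = m @ False # vs" using app_split[of xs "False # ys" us "False # vs"] by auto
  then obtain m' where "m = False # m'" using h(2) by (cases m) auto
  then show ?thesis using m by auto
qed

lemma bal_Nil[simp]: "bal []" by (simp add: bal_def nn_def)

lemma bal_append: "bal A \<Longrightarrow> bal B \<Longrightarrow> bal (A @ B)"
  unfolding bal_def nn_def by (auto simp: height_append)

lemma bal_split: "bal (A @ B) \<Longrightarrow> height A (length A) = 0 \<Longrightarrow> bal A \<and> bal B"
proof -
  assume h: "bal (A @ B)" "height A (length A) = 0"
  have hB: "height (A @ B) (length A + i) = height B i" for i
    using h(2) by (cases i) (simp_all add: height_append)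
  have "0 \<le> height A i" if "i \<le> length A" for i
    using h nn_all[of "A @ B" i] that unfolding bal_def by (simp add: height_append)
  moreover have "0 \<le> height B i" for i
    using hB[of i] h nn_all[of "A @ B" "length A + i"] unfolding bal_def by simp
  moreover have "height B (length B) = 0"
    using h hB[of "length B"] unfolding bal_def by simp
  ultimately show ?thesis using h(2) unfolding bal_def nn_def by auto
qed

lemma bal_wrap: "bal X \<Longrightarrow> bal Y \<Longrightarrow> bal (True # X @ False # Y)"
proof -
  assume X: "bal X" and Y: "bal Y"
  have "bal (True # X @ [False])"
    unfolding bal_def nn_def
  proof (intro conjI allI impI)
    fix i assume "i \<le> length (True # X @ [False])"
    show "0 \<le> height (True # X @ [False]) i"
    proof (cases i)
      case 0 then show ?thesis by simp
    next
      case (Suc j)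
      show ?thesis
      proof (cases "j \<le> length X")
        case True then show ?thesis using nn_all[of X j] X Suc unfolding bal_def by (simp add: height_append)
      next
        case False
        then have "j = Suc (length X)" using Suc \<open>i \<le> length (True # X @ [False])\<close> by simp
        then show ?thesis using X Suc unfolding bal_def by (simp add: height_append)
      qed
    qed
  next
    show "height (True # X @ [False]) (length (True # X @ [False])) = 0"
      using X unfolding bal_def by (simp add: height_append)
  qed
  from bal_append[OF this Y] show ?thesis by simp
qed

lemma wrap_height: "p \<le> length X \<Longrightarrow> height (True # X @ False # Y) (Suc p) = 1 + height X p"
  by (simp add: height_append)

lemma first_uniq:
  assumes eq: "True # Z @ False # W = True # Z' @ False # W'" and b: "bal Z" "bal Z'"
  shows "Z = Z' \<and> W = W'"
proof -
  have *: False if "Z @ False # W = Z' @ False # W'" "bal Z" "bal Z'" "length Z < length Z'" for Z W Z' W'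
  proof -
    from app_splitF[OF that(1,4)] obtain M where "Z' = Z @ False # M" by blast
    then have "height Z' (Suc (length Z)) = -1" using that(2) unfolding bal_def
      by (simp add: height_append)
    then show False using nn_all[of Z' "Suc (length Z)"] that(3) unfolding bal_def by simp
  qed
  from eq have e2: "Z @ False # W = Z' @ False # W'" by simp
  have "length Z = length Z'"
    using *[OF e2 b] *[OF e2[symmetric] b(2) b(1)] by (meson linorder_neqE_nat)
  then show ?thesis using e2 by auto
qed

lemma excursion_pos: "excursion e \<Longrightarrow> i \<le> length e \<Longrightarrow> 0 \<le> height e i"
  unfolding excursion_def by (cases "i = 0 \<or> i = length e") (auto intro: less_imp_le)

lemma excursion_bal: "excursion e \<Longrightarrow> bal e"
  unfolding bal_def nn_def using excursion_pos by (auto simp: excursion_def)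

lemma split_star:
  "tamari_step\<^sup>*\<^sup>* P Q \<Longrightarrow> nn P \<Longrightarrow> k \<le> length Q \<Longrightarrow> height Q k = 0 \<Longrightarrow>
   \<exists>P1 P2. P = P1 @ P2 \<and> length P1 = k \<and> tamari_step\<^sup>*\<^sup>* P1 (take k Q) \<and> tamari_step\<^sup>*\<^sup>* P2 (drop k Q)"
proof (induction Q arbitrary: k rule: rtranclp_induct)
  case base
  then show ?case by (intro exI[where x="take k P"] exI[where x="drop k P"]) auto
next
  case (step Q0 Q)
  then obtain A e B where Q0: "Q0 = A @ False # e @ B" and ex: "excursion e"
    and Q: "Q = A @ e @ False # B"
    unfolding tamari_step_def by blast
  have nnQ: "nn Q" using ts_nn_star[OF rtranclp.rtrancl_into_rtrancl[OF step.hyps]] step.prems by simp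
  have lenQ0: "length Q0 = length Q" using Q0 Q by simp
  consider "k \<le> length A" | "length A + length e + 1 \<le> k" | "length A < k" "k \<le> length A + length e"
    by linarith
  then show ?case
  proof cases
    case 1
    have "height Q0 k = 0" using ts_height_gen(2)[OF ex, of k A B] 1 Q0 Q step.prems by simp
    with step.IH[of k] step.prems lenQ0 obtain P1 P2 where
      h: "P = P1 @ P2" "length P1 = k" "tamari_step\<^sup>*\<^sup>* P1 (take k Q0)" "tamari_step\<^sup>*\<^sup>* P2 (drop k Q0)"
      by auto
    have "take k Q0 = take k Q" using 1 Q0 Q by simp
    moreover have "tamari_step (drop k Q0) (drop k Q)"
      using 1 Q0 Q ex unfolding tamari_step_def by auto
    ultimately show ?thesis using h by (metis rtranclp.rtrancl_into_rtrancl)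
  next
    case 2
    have "height Q0 k = 0" using ts_height_gen(2)[OF ex, of k A B] 2 Q0 Q step.prems by simp
    with step.IH[of k] step.prems lenQ0 obtain P1 P2 where
      h: "P = P1 @ P2" "length P1 = k" "tamari_step\<^sup>*\<^sup>* P1 (take k Q0)" "tamari_step\<^sup>*\<^sup>* P2 (drop k Q0)"
      by auto
    obtain m where m: "k = length A + length e + 1 + m" using 2 le_Suc_ex by (metis add.commute)
    have "drop k Q0 = drop k Q" using m Q0 Q by simp
    moreover have "take k Q0 = A @ False # e @ take m B" "take k Q = A @ e @ False # take m B"
      using m Q0 Q by auto
    moreover have "tamari_step (A @ False # e @ take m B) (A @ e @ False # take m B)"
      using ex unfolding tamari_step_def by blast
    ultimately show ?thesis using h by (metis rtranclp.rtrancl_into_rtrancl)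
  next
    case 3
    obtain m where m: "k = length A + m" "0 < m" "m \<le> length e" using 3
      by (metis add_diff_inverse_nat less_diff_conv2 nat_less_le not_less zero_less_diff diff_le_mono le_add_diff_inverse add_le_cancel_left)
    have hA: "0 \<le> height Q (length A)" using nn_all[OF nnQ] by simp
    have hQA: "height Q (length A) = height A (length A)" using Q by (simp add: height_append)
    have hk: "height Q k = height A (length A) + height e m" using Q m by (simp add: height_append)
    show ?thesis
    proof (cases "m < length e")
      case True
      then have "0 < height e m" using ex m unfolding excursion_def by auto
      then show ?thesis using hA hQA hk step.prems by simp
    next
      case False
      then have me: "m = length e" using m by simp
      have "height Q (Suc k) = height A (length A) - 1"
        using Q m me ex unfolding excursion_def by (simp add: height_append)
      moreover have "0 \<le> height Q (Suc k)" using nn_all[OF nnQ] by simp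
      moreover have "height e m = 0" using me ex unfolding excursion_def by simp
      ultimately show ?thesis using hk step.prems by simp
    qed
  qed
qed

section \<open>first return\<close>

lemma first_star:
  "tamari_step\<^sup>*\<^sup>* R R' \<Longrightarrow> R = True # Z @ False # W \<Longrightarrow> bal Z \<Longrightarrow>
   \<exists>Z' W'. R' = True # Z' @ False # W' \<and> bal Z' \<and> tamari_step\<^sup>*\<^sup>* (Z @ W) (Z' @ W')"
proof (induction R' rule: rtranclp_induct)
  case base then show ?case by blast
next
  case (step R0 R')
  then obtain Z0 W0 where IH: "R0 = True # Z0 @ False # W0" "bal Z0" "tamari_step\<^sup>*\<^sup>* (Z @ W) (Z0 @ W0)"
    by blast
  from step.hyps(2) obtain A e B where R0: "R0 = A @ False # e @ B" and ex: "excursion e"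
    and R': "R' = A @ e @ False # B"
    unfolding tamari_step_def by blast
  obtain A' where A: "A = True # A'" using R0 IH(1) by (cases A) auto
  have eq: "Z0 @ False # W0 = A' @ False # e @ B" using R0 IH(1) A by simp
  consider "length A' < length Z0" | "length A' = length Z0" | "length Z0 < length A'" by linarith
  then show ?case
  proof cases
    case 1
    then obtain Z2 where Z0: "Z0 = A' @ False # Z2" and Z2: "Z2 @ False # W0 = e @ B"
      using app_splitF[OF eq[symmetric]] by auto
    have hA': "1 \<le> height A' (length A')"
      using nn_all[of Z0 "Suc (length A')"] IH(2) Z0 unfolding bal_def by (simp add: height_append)
    have hZ2: "height Z2 (length Z2) \<le> 0"
      using IH(2) Z0 hA' unfolding bal_def by (simp add: height_append)
    have le: "length e \<le> length Z2"
    proof (rule ccontr)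
      assume "\<not> length e \<le> length Z2"
      then obtain m where m: "e = Z2 @ m" "False # W0 = m @ B"
        using app_split[OF Z2] by auto
      then obtain e2 where e: "e = Z2 @ False # e2" using \<open>\<not> length e \<le> length Z2\<close> by (cases m) auto
      have h1: "height e (Suc (length Z2)) = height Z2 (length Z2) - 1"
        using e by (simp add: height_append)
      show False
      proof (cases "Suc (length Z2) < length e")
        case True
        then have "0 < height e (Suc (length Z2))" using ex unfolding excursion_def by auto
        then show False using h1 hZ2 by simp
      next
        case False
        then have "Suc (length Z2) = length e" using e by simp
        then show False using h1 hZ2 ex unfolding excursion_def by auto
      qed
    qed
    then obtain Z3 where Z2e: "Z2 = e @ Z3" and B: "B = Z3 @ False # W0"
      using app_split[OF Z2[symmetric]] by auto
    define Z' where "Z' = A' @ e @ False # Z3"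
    have st: "tamari_step Z0 Z'" unfolding tamari_step_def Z'_def Z0 Z2e using ex by blast
    have "bal Z'" using ts_bal_star[OF r_into_rtranclp[of tamari_step, OF st] IH(2)] .
    moreover have "R' = True # Z' @ False # W0" using R' A B Z'_def by simp
    moreover have "tamari_step (Z0 @ W0) (Z' @ W0)" using ts_cong[OF st, of "[]" W0] by simp
    ultimately show ?thesis using IH(3) by (intro exI[of _ Z'] exI[of _ W0]) (blast intro: rtranclp.rtrancl_into_rtrancl)
  next
    case 2
    then have AZ: "A' = Z0" and W0: "W0 = e @ B" using eq by auto
    have "bal (Z0 @ e)" using bal_append[OF IH(2) excursion_bal[OF ex]] .
    moreover have "R' = True # (Z0 @ e) @ False # B" using R' A AZ by simp
    moreover have "Z0 @ W0 = (Z0 @ e) @ B" using W0 by simp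
    ultimately show ?thesis using IH(3) by metis
  next
    case 3
    then obtain A2 where A': "A' = Z0 @ False # A2" and W0: "W0 = A2 @ False # e @ B"
      using app_splitF[OF eq] by auto
    have st: "tamari_step W0 (A2 @ e @ False # B)" unfolding tamari_step_def W0 using ex by blast
    have "R' = True # Z0 @ False # (A2 @ e @ False # B)" using R' A A' by simp
    moreover have "tamari_step (Z0 @ W0) (Z0 @ (A2 @ e @ False # B))"
      using ts_cong[OF st, of Z0 "[]"] by simp
    ultimately show ?thesis using IH by (intro exI[of _ Z0] exI[of _ "A2 @ e @ False # B"]) (blast intro: rtranclp.rtrancl_into_rtrancl)
  qed
qed

section \<open>moving a down step past a balanced word\<close>

lemma height_take: "i \<le> r \<Longrightarrow> height (take r Y) i = height Y i"
  by (simp add: height_def min_def)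

lemma first_exc:
  assumes "bal Y" "Y \<noteq> []"
  shows "\<exists>r. 0 < r \<and> r \<le> length Y \<and> excursion (take r Y) \<and> bal (drop r Y)"
proof -
  define r where "r = (LEAST r. 0 < r \<and> height Y r = 0)"
  have ex: "0 < length Y \<and> height Y (length Y) = 0" using assms unfolding bal_def by auto
  have r: "0 < r \<and> height Y r = 0" unfolding r_def by (rule LeastI_ex) (use ex in blast)
  have rle: "r \<le> length Y" unfolding r_def by (rule Least_le) (use ex in blast)
  have pos: "0 < height Y i" if "0 < i" "i < r" for i
  proof -
    have "height Y i \<noteq> 0" using not_less_Least[of i "\<lambda>r. 0 < r \<and> height Y r = 0"] that
      unfolding r_def by auto
    moreover have "0 \<le> height Y i" using nn_all assms(1) unfolding bal_def by auto
    ultimately show ?thesis by simp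
  qed
  have lt: "length (take r Y) = r" using rle by simp
  have "excursion (take r Y)"
    unfolding excursion_def lt using r rle pos assms(2) height_take[of _ r Y]
    by auto
  moreover have "bal (drop r Y)"
  proof -
    have "Y = take r Y @ drop r Y" by simp
    moreover have "height (take r Y) (length (take r Y)) = 0" using r lt height_take[of r r Y] by simp
    ultimately show ?thesis using bal_split[of "take r Y" "drop r Y"] assms(1) by metis
  qed
  ultimately show ?thesis using r rle by blast
qed

lemma dmove: "bal Y \<Longrightarrow> tamari_step\<^sup>*\<^sup>* (A @ False # Y @ B) (A @ Y @ False # B)"
proof (induction "length Y" arbitrary: Y A rule: less_induct)
  case less
  show ?case
  proof (cases "Y = []")
    case True then show ?thesis by simp
  next
    case False
    obtain r where r: "0 < r" "r \<le> length Y" "excursion (take r Y)" "bal (drop r Y)"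
      using first_exc[OF less.prems False] by blast
    define e where "e = take r Y"
    define Y2 where "Y2 = drop r Y"
    have Y: "Y = e @ Y2" unfolding e_def Y2_def by simp
    have st: "tamari_step (A @ False # e @ (Y2 @ B)) (A @ e @ False # Y2 @ B)"
      unfolding tamari_step_def using r(3) e_def by blast
    have "length Y2 < length Y" using r unfolding Y2_def by simp
    then have "tamari_step\<^sup>*\<^sup>* ((A @ e) @ False # Y2 @ B) ((A @ e) @ Y2 @ False # B)"
      using less.hyps r(4) Y2_def by blast
    then show ?thesis using st Y by (simp add: converse_rtranclp_into_rtranclp)
  qed
qed


definition Ct :: "bool list \<Rightarrow> nat set" where
  "Ct P = {j. j \<le> length P \<and> height P j = 0}"

definition bP :: "bool list \<Rightarrow> bool list \<Rightarrow> nat \<Rightarrow> bool list" where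
  "bP P1 P2 s = True # take s P1 @ False # drop s P1 @ P2"

lemma finite_Ct[simp]: "finite (Ct P)"
  unfolding Ct_def by (rule finite_subset[of _ "{..length P}"]) auto

lemma bal_take_drop: "bal P \<Longrightarrow> s \<in> Ct P \<Longrightarrow> bal (take s P) \<and> bal (drop s P)"
proof -
  assume b: "bal P" and s: "s \<in> Ct P"
  have sl: "s \<le> length P" "height P s = 0" using s unfolding Ct_def by auto
  then have "length (take s P) = s" by simp
  then have "height (take s P) (length (take s P)) = 0" using height_take[of s s P] sl by simp
  then show ?thesis using bal_split[of "take s P" "drop s P"] b by simp
qed

lemma bal_len: "bal P \<Longrightarrow> length P = 2 * count_list P True"
  using height_full[of P] count_tf[of P] unfolding bal_def by linarith

lemma exc_shape: "excursion e \<Longrightarrow> \<exists>X. e = True # X @ [False] \<and> bal X"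
proof -
  assume ex: "excursion e"
  then obtain a e' where e: "e = a # e'" unfolding excursion_def by (cases e) auto
  have e'ne: "e' \<noteq> []"
  proof
    assume "e' = []"
    then have "height e (length e) = step_val a" using e by simp
    then show False using ex unfolding excursion_def step_val_def by (auto split: if_splits)
  qed
  then obtain X b where e': "e' = X @ [b]" by (metis rev_exhaust)
  have len: "length e = length X + 2" using e e' by simp
  have hX: "height e (Suc i) = step_val a + height X i" if "i \<le> length X" for i
    using that e e' by (simp add: height_append)
  have pos: "0 < height e (Suc i)" if "i \<le> length X" for i
    using ex that len unfolding excursion_def by auto
  have a: "a = True"
    using pos[of 0] hX[of 0] by (cases a) auto
  have fin: "height e (length e) = 1 + height X (length X) + step_val b"
    using e e' a by (simp add: height_append)
  have p1: "0 < 1 + height X (length X)" using pos[of "length X"] hX[of "length X"] a by simp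
  have b: "b = False" and hXe: "height X (length X) = 0"
    using fin p1 ex unfolding excursion_def by (cases b; auto)+
  have "nn X" unfolding nn_def using pos hX a by force
  then have "bal X" using hXe unfolding bal_def by simp
  then show ?thesis using e e' a b by blast
qed

lemma first_ret: "bal P \<Longrightarrow> P \<noteq> [] \<Longrightarrow> \<exists>X Y. P = True # X @ False # Y \<and> bal X \<and> bal Y"
proof -
  assume b: "bal P" "P \<noteq> []"
  obtain r where r: "0 < r" "r \<le> length P" "excursion (take r P)" "bal (drop r P)"
    using first_exc[OF b] by blast
  obtain X where X: "take r P = True # X @ [False]" "bal X" using exc_shape[OF r(3)] by blast
  have "P = True # X @ False # drop r P" using X(1) by (metis append_take_drop_id append.assoc append_Cons append_Nil)
  then show ?thesis using X r by blast
qed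

lemma height_wrap2: "bal X \<Longrightarrow> height (True # X @ False # Y) (Suc (Suc (length X)) + d) = height Y d"
  unfolding bal_def by (simp add: height_append)

lemma decomp_intro:
  assumes I1: "tamari_le k P1 Q1" and I2: "tamari_le m P2 Q2" and s: "s \<in> Ct P1"
  shows "tamari_le (Suc (k + m)) (bP P1 P2 s) (True # Q1 @ False # Q2)"
proof -
  have bP1: "bal P1" "length P1 = 2 * k" and bQ1: "bal Q1" "length Q1 = 2 * k"
    and bP2: "bal P2" "length P2 = 2 * m" and bQ2: "bal Q2" "length Q2 = 2 * m"
    and st1: "tamari_step\<^sup>*\<^sup>* P1 Q1" and st2: "tamari_step\<^sup>*\<^sup>* P2 Q2"
    using I1 I2 unfolding tamari_le_def dyck_bal by auto
  define X where "X = take s P1"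
  define Y where "Y = drop s P1"
  have bX: "bal X" and bY: "bal Y" using bal_take_drop[OF bP1(1) s] X_def Y_def by auto
  have P1: "P1 = X @ Y" using X_def Y_def by simp
  have "dyck_path (Suc (k + m)) (bP P1 P2 s)"
    unfolding dyck_bal bP_def using bal_wrap[OF bX bal_append[OF bY bP2(1)]] bP1 bP2 X_def Y_def
    by simp
  moreover have "dyck_path (Suc (k + m)) (True # Q1 @ False # Q2)"
    unfolding dyck_bal using bal_wrap[OF bQ1(1) bQ2(1)] bQ1 bQ2 by simp
  moreover have "tamari_step\<^sup>*\<^sup>* (bP P1 P2 s) (True # Q1 @ False # Q2)"
  proof -
    have a: "tamari_step\<^sup>*\<^sup>* ((True # X) @ False # Y @ P2) ((True # X) @ Y @ False # P2)"
      by (rule dmove[OF bY])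
    have b: "tamari_step\<^sup>*\<^sup>* ([True] @ (X @ Y) @ (False # P2)) ([True] @ Q1 @ (False # P2))"
      by (rule ts_cong_star) (use st1 P1 in simp)
    have c: "tamari_step\<^sup>*\<^sup>* ((True # Q1 @ [False]) @ P2 @ []) ((True # Q1 @ [False]) @ Q2 @ [])"
      by (rule ts_cong_star[OF st2])
    show ?thesis using a b c unfolding bP_def X_def[symmetric] Y_def[symmetric] by simp
  qed
  ultimately show ?thesis unfolding tamari_le_def by blast
qed

lemma decomp_elim:
  assumes I: "tamari_le (Suc n) P Q"
  shows "\<exists>k P1 Q1 P2 Q2 s. k \<le> n \<and> tamari_le k P1 Q1 \<and> tamari_le (n - k) P2 Q2 \<and> s \<in> Ct P1
     \<and> P = bP P1 P2 s \<and> Q = True # Q1 @ False # Q2"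
proof -
  have bP: "bal P" "length P = 2 * Suc n" and bQ: "bal Q" "length Q = 2 * Suc n"
    and st: "tamari_step\<^sup>*\<^sup>* P Q"
    using I unfolding tamari_le_def dyck_bal by auto
  have "P \<noteq> []" "Q \<noteq> []" using bP(2) bQ(2) by auto
  obtain X Y where P: "P = True # X @ False # Y" and bX: "bal X" and bY: "bal Y"
    using first_ret[OF bP(1) \<open>P \<noteq> []\<close>] by blast
  obtain Q1 Q2 where Q: "Q = True # Q1 @ False # Q2" and bQ1: "bal Q1" and bQ2: "bal Q2"
    using first_ret[OF bQ(1) \<open>Q \<noteq> []\<close>] by blast
  define K where "K = Suc (Suc (length Q1))"
  have hQK: "height Q K = 0" using height_wrap2[OF bQ1, of Q2 0] Q K_def by simp
  have KQ: "K \<le> length Q" using Q K_def by simp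
  obtain R1 Y2 where sp: "P = R1 @ Y2" "length R1 = K" "tamari_step\<^sup>*\<^sup>* R1 (take K Q)"
    "tamari_step\<^sup>*\<^sup>* Y2 (drop K Q)"
    using split_star[OF st _ KQ hQK] bP(1) unfolding bal_def by blast
  have hPK: "height P K = 0"
    using ts_height_star[OF st, of K] hQK nn_all[of P K] bP(1) unfolding bal_def by simp
  have XQ1: "length X \<le> length Q1"
  proof (rule ccontr)
    assume "\<not> length X \<le> length Q1"
    then have "height P K = 1 + height X (Suc (length Q1))"
      using P K_def wrap_height[of "Suc (length Q1)" X Y] by simp
    then show False using hPK nn_all[of X "Suc (length Q1)"] bX unfolding bal_def by simp
  qed
  define d where "d = length Q1 - length X"
  have Kd: "K = Suc (Suc (length X)) + d" using XQ1 K_def d_def by simp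
  have lenPQ: "length P = length Q" using bP bQ by simp
  have dY: "d \<le> length Y" using lenPQ P Q K_def d_def XQ1 by simp
  define Y1 where "Y1 = take d Y"
  have "R1 = take K P" "Y2 = drop K P" using sp(1,2) by simp_all
  then have R1: "R1 = True # X @ False # Y1" and Y2: "Y2 = drop d Y"
    using P Kd Y1_def by simp_all
  have tQ: "take K Q = True # Q1 @ False # []" and dQ: "drop K Q = Q2" using Q K_def by simp_all
  obtain Z' W' where fs: "take K Q = True # Z' @ False # W'" "bal Z'" "tamari_step\<^sup>*\<^sup>* (X @ Y1) (Z' @ W')"
    using first_star[OF sp(3) R1 bX] by blast
  have "Q1 = Z' \<and> [] = W'" using first_uniq[of Q1 "[]" Z' W'] fs(1,2) tQ bQ1 by simp
  then have st1: "tamari_step\<^sup>*\<^sup>* (X @ Y1) Q1" using fs(3) by simp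
  have hYd: "height Y d = 0" using hPK height_wrap2[OF bX, of Y d] P Kd by simp
  have "height (take d Y) (length (take d Y)) = 0" using hYd dY height_take[of d d Y] by simp
  then have bY1: "bal Y1" and bY2: "bal Y2" using bal_split[of "take d Y" "drop d Y"] bY Y1_def Y2 by auto
  define k where "k = count_list Q1 True"
  have lQ1: "length Q1 = 2 * k" using bal_len[OF bQ1] k_def by simp
  have lP1: "length (X @ Y1) = length Q1" using Y1_def d_def dY XQ1 by simp
  have lQ2: "length Q2 = 2 * (n - k)" and kn: "k \<le> n" using bQ(2) Q lQ1 by simp_all
  have lY2: "length Y2 = length Q2" using ts_len_star[OF sp(4)] dQ by simp
  have "tamari_le k (X @ Y1) Q1" unfolding tamari_le_def dyck_bal
    using bal_append[OF bX bY1] bQ1 lQ1 lP1 st1 by simp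
  moreover have "tamari_le (n - k) Y2 Q2" unfolding tamari_le_def dyck_bal
    using bY2 bQ2 lQ2 lY2 sp(4) dQ by simp
  moreover have "length X \<in> Ct (X @ Y1)" unfolding Ct_def using bX unfolding bal_def by (simp add: height_append)
  moreover have "P = bP (X @ Y1) Y2 (length X)" unfolding bP_def using P Y1_def Y2 by simp
  ultimately show ?thesis using Q kn by blast
qed

lemma finite_intervals[simp]: "finite (intervals n)"
proof -
  have f: "finite {xs :: bool list. length xs = 2 * n}"
    using finite_lists_length_eq[of "UNIV :: bool set" "2 * n"] by simp
  have "intervals n \<subseteq> {xs :: bool list. length xs = 2 * n} \<times> {xs. length xs = 2 * n}"
    unfolding intervals_def tamari_le_def dyck_path_def by auto
  then show ?thesis using finite_subset f by blast
qed

definition Dset :: "nat \<Rightarrow> ((nat \<times> (bool list \<times> bool list) \<times> (bool list \<times> bool list)) \<times> nat) set" where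
  "Dset n = Sigma (SIGMA k:{..n}. intervals k \<times> intervals (n - k)) (\<lambda>(k, I1, I2). Ct (fst I1))"

definition gmap :: "(nat \<times> (bool list \<times> bool list) \<times> (bool list \<times> bool list)) \<times> nat \<Rightarrow> bool list \<times> bool list" where
  "gmap d = (case d of ((k, (P1, Q1), (P2, Q2)), s) \<Rightarrow> (bP P1 P2 s, True # Q1 @ False # Q2))"

lemma gmap_simp: "gmap ((k, I1, I2), s) = (bP (fst I1) (fst I2) s, True # snd I1 @ False # snd I2)"
  by (simp add: gmap_def split: prod.splits)

lemma Dset_mem: "((k, (P1, Q1), (P2, Q2)), s) \<in> Dset n \<longleftrightarrow>
   k \<le> n \<and> tamari_le k P1 Q1 \<and> tamari_le (n - k) P2 Q2 \<and> s \<in> Ct P1"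
  unfolding Dset_def intervals_def by simp

lemma gmap_inj: "inj_on gmap (Dset n)"
proof (rule inj_onI)
  fix a b assume a: "a \<in> Dset n" and b: "b \<in> Dset n" and eq: "gmap a = gmap b"
  obtain k P1 Q1 P2 Q2 s where av: "a = ((k, (P1, Q1), (P2, Q2)), s)" by (cases a) auto
  obtain k' P1' Q1' P2' Q2' s' where bv: "b = ((k', (P1', Q1'), (P2', Q2')), s')" by (cases b) auto
  have I1: "tamari_le k P1 Q1" "tamari_le (n - k) P2 Q2" "s \<in> Ct P1"
    using a unfolding av Dset_mem by auto
  have I1': "tamari_le k' P1' Q1'" "tamari_le (n - k') P2' Q2'" "s' \<in> Ct P1'"
    using b unfolding bv Dset_mem by auto
  have b1: "bal P1" "bal Q1" "length P1 = 2 * k" "length Q1 = 2 * k"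
    using I1(1) unfolding tamari_le_def dyck_bal by auto
  have b1': "bal P1'" "bal Q1'" "length P1' = 2 * k'" "length Q1' = 2 * k'"
    using I1'(1) unfolding tamari_le_def dyck_bal by auto
  have eqP: "True # take s P1 @ False # (drop s P1 @ P2) = True # take s' P1' @ False # (drop s' P1' @ P2')"
    and eqQ: "True # Q1 @ False # Q2 = True # Q1' @ False # Q2'"
    using eq unfolding av bv gmap_simp bP_def by simp_all
  have q: "Q1 = Q1' \<and> Q2 = Q2'" using first_uniq[OF eqQ b1(2) b1'(2)] .
  then have kk: "k = k'" using b1(4) b1'(4) by simp
  have t1: "bal (take s P1)" using bal_take_drop[OF b1(1) I1(3)] by simp
  have t1': "bal (take s' P1')" using bal_take_drop[OF b1'(1) I1'(3)] by simp
  have p: "take s P1 = take s' P1'" "drop s P1 @ P2 = drop s' P1' @ P2'"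
    using first_uniq[OF eqP t1 t1'] by simp_all
  have sl: "s \<le> length P1" "s' \<le> length P1'" using I1(3) I1'(3) unfolding Ct_def by auto
  have "length (take s P1) = s" "length (take s' P1') = s'" using sl by simp_all
  then have ss: "s = s'" using p(1) by simp
  have "length (drop s P1) = length (drop s' P1')" using ss b1(3) b1'(3) kk by simp
  then have d: "drop s P1 = drop s' P1'" "P2 = P2'" using p(2) by simp_all
  have "P1 = P1'" using p(1) d(1) by (metis append_take_drop_id)
  then show "a = b" using av bv q kk ss d by simp
qed

lemma gmap_bij: "bij_betw gmap (Dset n) (intervals (Suc n))"
proof (rule bij_betw_imageI)
  show "inj_on gmap (Dset n)" by (rule gmap_inj)
next
  show "gmap ` Dset n = intervals (Suc n)"
  proof
    show "gmap ` Dset n \<subseteq> intervals (Suc n)"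
    proof
      fix I assume "I \<in> gmap ` Dset n"
      then obtain d where d: "d \<in> Dset n" "I = gmap d" by blast
      obtain k P1 Q1 P2 Q2 s where dv: "d = ((k, (P1, Q1), (P2, Q2)), s)" by (cases d) auto
      have h: "k \<le> n" "tamari_le k P1 Q1" "tamari_le (n - k) P2 Q2" "s \<in> Ct P1"
        using d(1) unfolding dv Dset_mem by auto
      have "tamari_le (Suc (k + (n - k))) (bP P1 P2 s) (True # Q1 @ False # Q2)"
        using decomp_intro[OF h(2,3,4)] .
      then show "I \<in> intervals (Suc n)" using h(1) d(2) unfolding dv intervals_def gmap_simp by simp
    qed
  next
    show "intervals (Suc n) \<subseteq> gmap ` Dset n"
    proof
      fix I assume "I \<in> intervals (Suc n)"
      then obtain P Q where I: "I = (P, Q)" "tamari_le (Suc n) P Q" unfolding intervals_def by auto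
      then obtain k P1 Q1 P2 Q2 s where h: "k \<le> n" "tamari_le k P1 Q1" "tamari_le (n - k) P2 Q2"
        "s \<in> Ct P1" "P = bP P1 P2 s" "Q = True # Q1 @ False # Q2"
        using decomp_elim by blast
      have "((k, (P1, Q1), (P2, Q2)), s) \<in> Dset n" unfolding Dset_mem using h by simp
      moreover have "I = gmap ((k, (P1, Q1), (P2, Q2)), s)" using h I unfolding gmap_simp by simp
      ultimately show "I \<in> gmap ` Dset n" by blast
    qed
  qed
qed

lemma sum_Sigma': "finite A \<Longrightarrow> (\<forall>x\<in>A. finite (B x)) \<Longrightarrow> (\<Sum>d\<in>Sigma A B. h d) = (\<Sum>z\<in>A. \<Sum>s\<in>B z. h (z, s))"
  by (subst sum.Sigma) (auto simp: case_prod_eta)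

lemma sum_decomp:
  fixes f :: "bool list \<Rightarrow> real"
  shows "(\<Sum>(P, Q)\<in>intervals (Suc n). f P) =
    (\<Sum>k\<le>n. \<Sum>(P1, Q1)\<in>intervals k. \<Sum>(P2, Q2)\<in>intervals (n - k). \<Sum>s\<in>Ct P1. f (bP P1 P2 s))"
proof -
  define h where "h = (\<lambda>d. (\<lambda>(P, Q). f P) (gmap d))"
  have "(\<Sum>(P, Q)\<in>intervals (Suc n). f P) = (\<Sum>d\<in>Dset n. h d)"
    unfolding h_def using sum.reindex_bij_betw[OF gmap_bij[of n], of "\<lambda>(P, Q). f P"] by simp
  also have "\<dots> = (\<Sum>z\<in>(SIGMA k:{..n}. intervals k \<times> intervals (n - k)). \<Sum>s\<in>Ct (fst (fst (snd z))). h (z, s))"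
  proof -
    have e: "(\<lambda>(k, I1, I2). Ct (fst I1)) = (\<lambda>z :: nat \<times> (bool list \<times> bool list) \<times> (bool list \<times> bool list). Ct (fst (fst (snd z))))"
      by (auto simp: fun_eq_iff split: prod.splits)
    show ?thesis unfolding Dset_def e by (rule sum_Sigma') auto
  qed
  also have "\<dots> = (\<Sum>k\<le>n. \<Sum>I\<in>intervals k \<times> intervals (n - k). \<Sum>s\<in>Ct (fst (fst I)). h ((k, I), s))"
    using sum_Sigma'[of "{..n}" "\<lambda>k. intervals k \<times> intervals (n - k)" "\<lambda>z. \<Sum>s\<in>Ct (fst (fst (snd z))). h (z, s)"]
    by simp
  also have "\<dots> = (\<Sum>k\<le>n. \<Sum>I1\<in>intervals k. \<Sum>I2\<in>intervals (n - k). \<Sum>s\<in>Ct (fst I1). h ((k, I1, I2), s))"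
  proof (rule sum.cong[OF refl])
    fix k
    show "(\<Sum>I\<in>intervals k \<times> intervals (n - k). \<Sum>s\<in>Ct (fst (fst I)). h ((k, I), s)) =
      (\<Sum>I1\<in>intervals k. \<Sum>I2\<in>intervals (n - k). \<Sum>s\<in>Ct (fst I1). h ((k, I1, I2), s))"
      using sum_Sigma'[of "intervals k" "\<lambda>_. intervals (n - k)" "\<lambda>I. \<Sum>s\<in>Ct (fst (fst I)). h ((k, I), s)"]
      by simp
  qed
  also have "\<dots> = (\<Sum>k\<le>n. \<Sum>(P1, Q1)\<in>intervals k. \<Sum>(P2, Q2)\<in>intervals (n - k). \<Sum>s\<in>Ct P1. f (bP P1 P2 s))"
    unfolding h_def gmap_simp by (simp add: split_beta)
  finally show ?thesis .
qed


lemma height_app_bal: "height A (length A) = 0 \<Longrightarrow> height (A @ B) (length A + r) = height B r"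
  by (cases r) (simp_all add: height_append)

lemma clt_Ct: "contact_lt P i = card {j \<in> Ct P. j < i}"
  unfolding contact_lt_def Ct_def by (rule arg_cong[where f=card]) auto

lemma cge_Ct: "contact_ge P i = card {j \<in> Ct P. i \<le> j}"
  unfolding contact_ge_def Ct_def by (rule arg_cong[where f=card]) auto

lemma contact_Ct: "contact P = card (Ct P)"
  unfolding contact_def Ct_def by simp

definition wt :: "real \<Rightarrow> real \<Rightarrow> real \<Rightarrow> bool list \<Rightarrow> nat \<Rightarrow> real" where
  "wt w x y P i = w ^ nat (height P i) * x ^ contact_lt P i * y ^ contact_ge P i"

definition Gw :: "real \<Rightarrow> real \<Rightarrow> real \<Rightarrow> bool list \<Rightarrow> real" where
  "Gw w x y P = (\<Sum>i = 0..length P. wt w x y P i)"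

lemma wt0: "wt w x y P 0 = y ^ contact P"
  unfolding wt_def clt_Ct cge_Ct contact_Ct by simp

context
  fixes P1 P2 :: "bool list" and s :: nat
  assumes b1: "bal P1" and b2: "bal P2" and sC: "s \<in> Ct P1"
begin

definition "XX = take s P1"
definition "YY = drop s P1"

lemma bX: "bal XX" and bY: "bal YY" using bal_take_drop[OF b1 sC] XX_def YY_def by auto
lemma sL: "s \<le> length P1" using sC unfolding Ct_def by simp
lemma lX: "length XX = s" using sL XX_def by simp
lemma P1XY: "P1 = XX @ YY" using XX_def YY_def by simp
lemma lP1: "length P1 = s + length YY" using sL YY_def by simp
lemma BXY: "bP P1 P2 s = True # XX @ False # YY @ P2" unfolding bP_def XX_def YY_def by simp
lemma lenB: "length (bP P1 P2 s) = Suc (Suc (length P1 + length P2))" unfolding bP_def using sL by simp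

lemma hA: "p \<le> s \<Longrightarrow> height (bP P1 P2 s) (Suc p) = 1 + height P1 p"
proof -
  assume p: "p \<le> s"
  have "height P1 p = height XX p" by (subst P1XY) (simp add: height_append lX p)
  then show ?thesis using wrap_height[of p XX "YY @ P2"] lX BXY p by simp
qed

lemma hB: "s \<le> p \<Longrightarrow> p \<le> length P1 \<Longrightarrow> height (bP P1 P2 s) (Suc (Suc p)) = height P1 p"
proof -
  assume a: "s \<le> p" "p \<le> length P1"
  have "height (bP P1 P2 s) (Suc (Suc (length XX)) + (p - s)) = height (YY @ P2) (p - s)"
    unfolding BXY by (rule height_wrap2[OF bX])
  moreover have "height (YY @ P2) (p - s) = height YY (p - s)"
    using a lP1 by (simp add: height_append)
  moreover have "height P1 p = height YY (p - s)"
    using height_app_bal[of XX YY "p - s"] bX a P1XY lX unfolding bal_def by simp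
  ultimately show ?thesis using a lX by simp
qed

lemma hC: "height (bP P1 P2 s) (Suc (Suc (length P1)) + r) = height P2 r"
proof -
  have "height (bP P1 P2 s) (Suc (Suc (length XX)) + (length YY + r)) = height (YY @ P2) (length YY + r)"
    unfolding BXY by (rule height_wrap2[OF bX])
  moreover have "height (YY @ P2) (length YY + r) = height P2 r"
    using height_app_bal bY unfolding bal_def by blast
  ultimately show ?thesis using lP1 lX by (simp add: add.assoc)
qed

lemma CtB: "Ct (bP P1 P2 s) = {0} \<union> (\<lambda>j. j + 2) ` {j \<in> Ct P1. s \<le> j \<and> j < length P1}
   \<union> (\<lambda>r. Suc (Suc (length P1)) + r) ` Ct P2"
proof (rule set_eqI)
  fix j
  let ?L = "length P1"
  have nn1: "0 \<le> height P1 p" for p using b1 nn_all unfolding bal_def by blast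
  consider "j = 0" | p where "j = Suc p" "p \<le> s" | p where "j = Suc (Suc p)" "s \<le> p" "p < ?L"
    | r where "j = Suc (Suc ?L) + r"
    using sL by (metis add.commute le_Suc_ex not_less not0_implies_Suc Suc_leI le_less_linear
        add_Suc_right plus_1_eq_Suc le_add1 Suc_le_eq)
  then show "j \<in> Ct (bP P1 P2 s) \<longleftrightarrow> j \<in> {0} \<union> (\<lambda>j. j + 2) ` {j \<in> Ct P1. s \<le> j \<and> j < ?L}
   \<union> (\<lambda>r. Suc (Suc ?L) + r) ` Ct P2"
  proof cases
    case 1 then show ?thesis unfolding Ct_def by simp
  next
    case 2
    have "height (bP P1 P2 s) j \<noteq> 0" using hA[OF 2(2)] nn1[of p] 2 by simp
    moreover have "j \<notin> (\<lambda>j. j + 2) ` {j \<in> Ct P1. s \<le> j \<and> j < ?L}" using 2 by auto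
    moreover have "j \<notin> (\<lambda>r. Suc (Suc ?L) + r) ` Ct P2" using 2 sL by auto
    ultimately show ?thesis using 2 unfolding Ct_def by auto
  next
    case 3
    have "height (bP P1 P2 s) j = height P1 p" using hB[of p] 3 by simp
    moreover have "j \<in> (\<lambda>j. j + 2) ` {j \<in> Ct P1. s \<le> j \<and> j < ?L} \<longleftrightarrow> p \<in> Ct P1"
      using 3 by auto
    moreover have "j \<notin> (\<lambda>r. Suc (Suc ?L) + r) ` Ct P2" using 3 by auto
    ultimately show ?thesis using 3 lenB unfolding Ct_def by auto
  next
    case 4
    have "height (bP P1 P2 s) j = height P2 r" using hC[of r] 4 by simp
    moreover have "j \<in> (\<lambda>r. Suc (Suc ?L) + r) ` Ct P2 \<longleftrightarrow> r \<in> Ct P2" using 4 by auto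
    moreover have "j \<notin> (\<lambda>j. j + 2) ` {j \<in> Ct P1. s \<le> j \<and> j < ?L}" using 4 by auto
    ultimately show ?thesis using 4 lenB unfolding Ct_def by auto
  qed
qed

lemma card_CtB: "card {j \<in> Ct (bP P1 P2 s). Q j} =
   (if Q 0 then 1 else 0) + card {j \<in> Ct P1. s \<le> j \<and> j < length P1 \<and> Q (j + 2)}
   + card {r \<in> Ct P2. Q (Suc (Suc (length P1)) + r)}"
proof -
  let ?L = "length P1"
  define A where "A = (if Q 0 then {0::nat} else {})"
  define B1 where "B1 = (\<lambda>j. j + 2) ` {j \<in> Ct P1. s \<le> j \<and> j < ?L \<and> Q (j + 2)}"
  define C1 where "C1 = (\<lambda>r. Suc (Suc ?L) + r) ` {r \<in> Ct P2. Q (Suc (Suc ?L) + r)}"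
  have eq: "{j \<in> Ct (bP P1 P2 s). Q j} = A \<union> B1 \<union> C1"
    unfolding CtB A_def B1_def C1_def by auto
  have fB: "finite B1" unfolding B1_def by simp
  have fC: "finite C1" unfolding C1_def by simp
  have d1: "A \<inter> B1 = {}" "(A \<union> B1) \<inter> C1 = {}" unfolding A_def B1_def C1_def by auto
  have cA: "card A = (if Q 0 then 1 else 0)" unfolding A_def by simp
  have cB: "card B1 = card {j \<in> Ct P1. s \<le> j \<and> j < ?L \<and> Q (j + 2)}"
    unfolding B1_def by (rule card_image) (auto simp: inj_on_def)
  have cC: "card C1 = card {r \<in> Ct P2. Q (Suc (Suc ?L) + r)}"
    unfolding C1_def by (rule card_image) (auto simp: inj_on_def)
  have "card (A \<union> B1 \<union> C1) = card A + card B1 + card C1"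
    using d1 fB fC by (simp add: card_Un_disjoint A_def)
  then show ?thesis using eq cA cB cC by simp
qed

definition "S1 = card {j \<in> Ct P1. s \<le> j \<and> j < length P1}"

lemma contactB: "contact (bP P1 P2 s) = Suc (S1 + card (Ct P2))"
proof -
  have "contact (bP P1 P2 s) = card {j \<in> Ct (bP P1 P2 s). True}" unfolding contact_Ct by simp
  also have "\<dots> = Suc (S1 + card (Ct P2))" unfolding card_CtB S1_def by simp
  finally show ?thesis .
qed

lemma wtA: "p \<le> s \<Longrightarrow> wt w x y (bP P1 P2 s) (Suc p) =
   w ^ Suc (nat (height P1 p)) * x * y ^ (S1 + card (Ct P2))"
proof -
  assume p: "p \<le> s"
  have h: "nat (height (bP P1 P2 s) (Suc p)) = Suc (nat (height P1 p))"
    using hA[OF p] nn_all[of P1 p] b1 unfolding bal_def by simp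
  have e1: "{j \<in> Ct P1. s \<le> j \<and> j < length P1 \<and> j + 2 < Suc p} = {}" using p by auto
  have e2: "{r \<in> Ct P2. Suc (Suc (length P1)) + r < Suc p} = {}" using p sL by auto
  have c1: "contact_lt (bP P1 P2 s) (Suc p) = 1" unfolding clt_Ct card_CtB e1 e2 by simp
  have e3: "{j \<in> Ct P1. s \<le> j \<and> j < length P1 \<and> Suc p \<le> j + 2} = {j \<in> Ct P1. s \<le> j \<and> j < length P1}"
    using p by auto
  have e4: "{r \<in> Ct P2. Suc p \<le> Suc (Suc (length P1)) + r} = Ct P2" using p sL by auto
  have c2: "contact_ge (bP P1 P2 s) (Suc p) = S1 + card (Ct P2)" unfolding cge_Ct card_CtB e3 e4 S1_def by simp
  show ?thesis unfolding wt_def h c1 c2 by simp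
qed

lemma wtB: "s \<le> p \<Longrightarrow> p < length P1 \<Longrightarrow> wt w x y (bP P1 P2 s) (Suc (Suc p)) =
   w ^ nat (height P1 p) * x ^ Suc (card {j \<in> Ct P1. s \<le> j \<and> j < p})
     * y ^ (card {j \<in> Ct P1. p \<le> j \<and> j < length P1} + card (Ct P2))"
proof -
  assume p: "s \<le> p" "p < length P1"
  have h: "height (bP P1 P2 s) (Suc (Suc p)) = height P1 p" using hB p by simp
  have e1: "{j \<in> Ct P1. s \<le> j \<and> j < length P1 \<and> j + 2 < Suc (Suc p)} = {j \<in> Ct P1. s \<le> j \<and> j < p}"
    using p by auto
  have e2: "{r \<in> Ct P2. Suc (Suc (length P1)) + r < Suc (Suc p)} = {}" using p by auto
  have c1: "contact_lt (bP P1 P2 s) (Suc (Suc p)) = Suc (card {j \<in> Ct P1. s \<le> j \<and> j < p})"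
    unfolding clt_Ct card_CtB e1 e2 by simp
  have e3: "{j \<in> Ct P1. s \<le> j \<and> j < length P1 \<and> Suc (Suc p) \<le> j + 2} = {j \<in> Ct P1. p \<le> j \<and> j < length P1}"
    using p by auto
  have e4: "{r \<in> Ct P2. Suc (Suc p) \<le> Suc (Suc (length P1)) + r} = Ct P2" using p by auto
  have c2: "contact_ge (bP P1 P2 s) (Suc (Suc p)) = card {j \<in> Ct P1. p \<le> j \<and> j < length P1} + card (Ct P2)"
    unfolding cge_Ct card_CtB e3 e4 by simp
  show ?thesis unfolding wt_def h c1 c2 by simp
qed

lemma wtC: "wt w x y (bP P1 P2 s) (Suc (Suc (length P1)) + r) =
   x ^ Suc S1 * wt w x y P2 r"
proof -
  have h: "height (bP P1 P2 s) (Suc (Suc (length P1)) + r) = height P2 r" using hC by simp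
  have e1: "{j \<in> Ct P1. s \<le> j \<and> j < length P1 \<and> j + 2 < Suc (Suc (length P1)) + r} = {j \<in> Ct P1. s \<le> j \<and> j < length P1}"
    by auto
  have e2: "{r' \<in> Ct P2. Suc (Suc (length P1)) + r' < Suc (Suc (length P1)) + r} = {j \<in> Ct P2. j < r}" by auto
  have c1: "contact_lt (bP P1 P2 s) (Suc (Suc (length P1)) + r) = Suc S1 + contact_lt P2 r"
    unfolding clt_Ct card_CtB e1 e2 S1_def by simp
  have e3: "{j \<in> Ct P1. s \<le> j \<and> j < length P1 \<and> Suc (Suc (length P1)) + r \<le> j + 2} = {}"
    by auto
  have e4: "{r' \<in> Ct P2. Suc (Suc (length P1)) + r \<le> Suc (Suc (length P1)) + r'} = {j \<in> Ct P2. r \<le> j}" by auto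
  have c2: "contact_ge (bP P1 P2 s) (Suc (Suc (length P1)) + r) = contact_ge P2 r"
    unfolding cge_Ct card_CtB e3 e4 by simp
  show ?thesis unfolding wt_def h c1 c2 by (simp add: power_add)
qed

lemma GwB: "Gw w x y (bP P1 P2 s) = y ^ contact (bP P1 P2 s)
   + (\<Sum>p\<le>s. wt w x y (bP P1 P2 s) (Suc p))
   + (\<Sum>p\<in>{s..<length P1}. wt w x y (bP P1 P2 s) (Suc (Suc p)))
   + (\<Sum>r\<le>length P2. wt w x y (bP P1 P2 s) (Suc (Suc (length P1)) + r))"
proof -
  let ?L = "length P1" and ?M = "length P2" and ?f = "wt w x y (bP P1 P2 s)"
  have eq: "{0..Suc (Suc (?L + ?M))} = {0} \<union> Suc ` {..s} \<union> (\<lambda>p. Suc (Suc p)) ` {s..<?L}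
     \<union> (\<lambda>r. Suc (Suc ?L) + r) ` {..?M}"
  proof (rule set_eqI)
    fix i
    show "i \<in> {0..Suc (Suc (?L + ?M))} \<longleftrightarrow> i \<in> {0} \<union> Suc ` {..s} \<union> (\<lambda>p. Suc (Suc p)) ` {s..<?L}
     \<union> (\<lambda>r. Suc (Suc ?L) + r) ` {..?M}"
    proof
      assume i: "i \<in> {0..Suc (Suc (?L + ?M))}"
      consider "i = 0" | "0 < i" "i \<le> Suc s" | "Suc s < i" "i < Suc (Suc ?L)" | "Suc (Suc ?L) \<le> i" by linarith
      then show "i \<in> {0} \<union> Suc ` {..s} \<union> (\<lambda>p. Suc (Suc p)) ` {s..<?L} \<union> (\<lambda>r. Suc (Suc ?L) + r) ` {..?M}"
      proof cases
        case 1 then show ?thesis by simp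
      next
        case 2 then have "i = Suc (i - 1)" "i - 1 \<le> s" by auto
        then show ?thesis by (metis UnI1 UnI2 atMost_iff image_eqI)
      next
        case 3 then have "i = Suc (Suc (i - 2))" "i - 2 \<in> {s..<?L}" by auto
        then show ?thesis by (metis UnI1 UnI2 image_eqI)
      next
        case 4 then have "i = Suc (Suc ?L) + (i - Suc (Suc ?L))" "i - Suc (Suc ?L) \<le> ?M" using i by auto
        then show ?thesis by (metis UnI2 atMost_iff image_eqI)
      qed
    next
      assume "i \<in> {0} \<union> Suc ` {..s} \<union> (\<lambda>p. Suc (Suc p)) ` {s..<?L} \<union> (\<lambda>r. Suc (Suc ?L) + r) ` {..?M}"
      then show "i \<in> {0..Suc (Suc (?L + ?M))}" using sL by auto
    qed
  qed
  have "Gw w x y (bP P1 P2 s) = sum ?f ({0} \<union> Suc ` {..s} \<union> (\<lambda>p. Suc (Suc p)) ` {s..<?L}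
     \<union> (\<lambda>r. Suc (Suc ?L) + r) ` {..?M})"
    unfolding Gw_def lenB eq ..
  also have "\<dots> = sum ?f ({0} \<union> Suc ` {..s} \<union> (\<lambda>p. Suc (Suc p)) ` {s..<?L})
     + sum ?f ((\<lambda>r. Suc (Suc ?L) + r) ` {..?M})"
    by (rule sum.union_disjoint) (use sL in auto)
  also have "sum ?f ({0} \<union> Suc ` {..s} \<union> (\<lambda>p. Suc (Suc p)) ` {s..<?L}) =
      sum ?f ({0} \<union> Suc ` {..s}) + sum ?f ((\<lambda>p. Suc (Suc p)) ` {s..<?L})"
    by (rule sum.union_disjoint) (use sL in auto)
  also have "sum ?f ({0} \<union> Suc ` {..s}) = sum ?f {0} + sum ?f (Suc ` {..s})"
    by (rule sum.union_disjoint) (use sL in auto)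
  also have "sum ?f (Suc ` {..s}) = (\<Sum>p\<le>s. ?f (Suc p))"
    by (rule sum.reindex_cong[where l=Suc]) auto
  also have "sum ?f ((\<lambda>p. Suc (Suc p)) ` {s..<?L}) = (\<Sum>p\<in>{s..<?L}. ?f (Suc (Suc p)))"
    by (rule sum.reindex_cong[where l="\<lambda>p. Suc (Suc p)"]) (auto simp: inj_on_def)
  also have "sum ?f ((\<lambda>r. Suc (Suc ?L) + r) ` {..?M}) = (\<Sum>r\<le>?M. ?f (Suc (Suc ?L) + r))"
    by (rule sum.reindex_cong[where l="\<lambda>r. Suc (Suc ?L) + r"]) (auto simp: inj_on_def)
  finally show ?thesis using wt0 by simp
qed

end


lemma card_ge_mono:
  fixes S :: "nat set"
  assumes "finite S" "s \<in> S" "s' \<in> S" "s < s'"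
  shows "card {t \<in> S. s' \<le> t} < card {t \<in> S. s \<le> t}"
proof (rule psubset_card_mono)
  show "finite {t \<in> S. s \<le> t}" using assms by simp
  have "s \<in> {t \<in> S. s \<le> t}" "s \<notin> {t \<in> S. s' \<le> t}" using assms by auto
  moreover have "{t \<in> S. s' \<le> t} \<subseteq> {t \<in> S. s \<le> t}" using assms by auto
  ultimately show "{t \<in> S. s' \<le> t} \<subset> {t \<in> S. s \<le> t}" by blast
qed

lemma sum_card_ge:
  fixes S :: "nat set" and f :: "nat \<Rightarrow> real"
  assumes fin: "finite S"
  shows "(\<Sum>s\<in>S. f (card {t \<in> S. s \<le> t})) = (\<Sum>k\<in>{1..card S}. f k)"
proof -
  let ?g = "\<lambda>s. card {t \<in> S. s \<le> t}"
  have inj: "inj_on ?g S"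
  proof (rule inj_onI)
    fix a b assume "a \<in> S" "b \<in> S" "?g a = ?g b"
    then show "a = b" using card_ge_mono[OF fin, of a b] card_ge_mono[OF fin, of b a]
      by (metis less_irrefl linorder_neqE_nat)
  qed
  have sub: "?g ` S \<subseteq> {1..card S}"
  proof
    fix k assume "k \<in> ?g ` S"
    then obtain s where s: "s \<in> S" "k = ?g s" by blast
    have "0 < ?g s" using s fin by (auto simp: card_gt_0_iff)
    moreover have "?g s \<le> card S" using fin by (intro card_mono) auto
    ultimately show "k \<in> {1..card S}" using s by simp
  qed
  have "card (?g ` S) = card {1..card S}" using card_image[OF inj] by simp
  then have im: "?g ` S = {1..card S}" using sub by (intro card_subset_eq) auto
  have "(\<Sum>s\<in>S. f (?g s)) = sum f (?g ` S)" using sum.reindex[OF inj, of f] by simp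
  then show ?thesis using im by simp
qed

lemma geom1: "((y::real) - 1) * (\<Sum>k\<in>{1..m}. y ^ k) = y ^ Suc m - y"
  by (induction m) (auto simp: algebra_simps)

lemma sum_shift1: "(\<Sum>k\<in>{1..n}. g k) = (\<Sum>k<n. g (Suc k))"
  by (induction n) auto

context
  fixes P1 P2 :: "bool list"
  assumes b1: "bal P1" and b2: "bal P2"
begin

lemma Ct0: "0 \<in> Ct P1" unfolding Ct_def by simp
lemma CtL: "length P1 \<in> Ct P1" using b1 unfolding Ct_def bal_def by simp
lemma CtsubL: "j \<in> Ct P1 \<Longrightarrow> j \<le> length P1" unfolding Ct_def by simp
lemma h0: "j \<in> Ct P1 \<Longrightarrow> height P1 j = 0" unfolding Ct_def by simp

lemma card_geL: "s \<le> length P1 \<Longrightarrow> card {t \<in> Ct P1. s \<le> t} = Suc (card {t \<in> Ct P1. s \<le> t \<and> t < length P1})"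
proof -
  assume s: "s \<le> length P1"
  have "{t \<in> Ct P1. s \<le> t} = insert (length P1) {t \<in> Ct P1. s \<le> t \<and> t < length P1}"
    using s CtL CtsubL by fastforce
  moreover have "finite {t \<in> Ct P1. s \<le> t \<and> t < length P1}" by simp
  ultimately show ?thesis by simp
qed

lemma c1_pos: "card (Ct P1) = Suc (card {t \<in> Ct P1. t < length P1})"
  using card_geL[of 0] by simp

definition "T2 w y = (\<Sum>p\<le>length P1. w ^ nat (height P1 p) * (\<Sum>k<contact_ge P1 p. y ^ k))"
definition "T4 w x y = (\<Sum>p<length P1. w ^ nat (height P1 p) * y ^ card {j \<in> Ct P1. p \<le> j \<and> j < length P1}
   * (\<Sum>k<contact_lt P1 p. x ^ k))"

lemma Asum: "(\<Sum>s\<in>Ct P1. \<Sum>p\<le>s. wt w x y (bP P1 P2 s) (Suc p)) = x * w * y ^ card (Ct P2) * T2 w y"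
proof -
  let ?S = "Ct P1" and ?L = "length P1" and ?c2 = "card (Ct P2)"
  define F where "F p s = w ^ Suc (nat (height P1 p)) * x * y ^ (S1 P1 s + ?c2)" for p s
  have "(\<Sum>s\<in>?S. \<Sum>p\<le>s. wt w x y (bP P1 P2 s) (Suc p)) = (\<Sum>s\<in>?S. \<Sum>p\<in>{p \<in> {..?L}. p \<le> s}. F p s)"
  proof (rule sum.cong[OF refl])
    fix s assume s: "s \<in> ?S"
    have "{..s} = {p \<in> {..?L}. p \<le> s}" using CtsubL[OF s] by auto
    then show "(\<Sum>p\<le>s. wt w x y (bP P1 P2 s) (Suc p)) = (\<Sum>p\<in>{p \<in> {..?L}. p \<le> s}. F p s)"
      using wtA[OF b1 b2 s] F_def by simp
  qed
  also have "\<dots> = (\<Sum>p\<in>{..?L}. \<Sum>s\<in>{s \<in> ?S. p \<le> s}. F p s)"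
    by (rule sum.swap_restrict) auto
  also have "\<dots> = (\<Sum>p\<le>?L. x * w * y ^ ?c2 * (w ^ nat (height P1 p) * (\<Sum>k<contact_ge P1 p. y ^ k)))"
  proof (rule sum.cong[OF refl])
    fix p assume p: "p \<in> {..?L}"
    define Sp where "Sp = {s \<in> ?S. p \<le> s}"
    have fin: "finite Sp" unfolding Sp_def by simp
    have "(\<Sum>s\<in>Sp. y ^ S1 P1 s) = (\<Sum>s\<in>Sp. (\<lambda>k. y ^ (k - 1)) (card {t \<in> Sp. s \<le> t}))"
    proof (rule sum.cong[OF refl])
      fix s assume s: "s \<in> Sp"
      have "{t \<in> Sp. s \<le> t} = {t \<in> ?S. s \<le> t}" using s unfolding Sp_def by auto
      have sS: "s \<in> ?S" using s unfolding Sp_def by simp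
      have "card {t \<in> Sp. s \<le> t} = Suc (S1 P1 s)"
        using card_geL[of s] CtsubL[OF sS] S1_def[OF b1 b2 sS] \<open>{t \<in> Sp. s \<le> t} = {t \<in> ?S. s \<le> t}\<close> by simp
      then show "y ^ S1 P1 s = (\<lambda>k. y ^ (k - 1)) (card {t \<in> Sp. s \<le> t})" by simp
    qed
    also have "\<dots> = (\<Sum>k\<in>{1..card Sp}. y ^ (k - 1))" by (rule sum_card_ge[OF fin])
    also have "\<dots> = (\<Sum>k<contact_ge P1 p. y ^ k)" unfolding sum_shift1 cge_Ct Sp_def by simp
    finally have inner: "(\<Sum>s\<in>Sp. y ^ S1 P1 s) = (\<Sum>k<contact_ge P1 p. y ^ k)" .
    have "(\<Sum>s\<in>Sp. F p s) = x * w * y ^ ?c2 * w ^ nat (height P1 p) * (\<Sum>s\<in>Sp. y ^ S1 P1 s)"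
      unfolding F_def sum_distrib_left by (simp add: power_add mult_ac)
    then show "(\<Sum>s\<in>{s \<in> ?S. p \<le> s}. F p s) = x * w * y ^ ?c2 * (w ^ nat (height P1 p) * (\<Sum>k<contact_ge P1 p. y ^ k))"
      using inner Sp_def by (simp add: mult_ac)
  qed
  also have "\<dots> = x * w * y ^ ?c2 * T2 w y" unfolding T2_def sum_distrib_left ..
  finally show ?thesis .
qed

lemma Bsum: "(\<Sum>s\<in>Ct P1. \<Sum>p\<in>{s..<length P1}. wt w x y (bP P1 P2 s) (Suc (Suc p))) =
   x * y ^ card (Ct P2) * (\<Sum>k\<in>{1..card (Ct P1) - 1}. y ^ k) + x\<^sup>2 * y ^ card (Ct P2) * T4 w x y"
proof -
  let ?S = "Ct P1" and ?L = "length P1" and ?c2 = "card (Ct P2)"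
  define cL where "cL p = card {j \<in> ?S. p \<le> j \<and> j < ?L}" for p
  define F where "F p s = w ^ nat (height P1 p) * x ^ Suc (card {j \<in> ?S. s \<le> j \<and> j < p}) * y ^ (cL p + ?c2)" for p s
  have "(\<Sum>s\<in>?S. \<Sum>p\<in>{s..<?L}. wt w x y (bP P1 P2 s) (Suc (Suc p))) = (\<Sum>s\<in>?S. \<Sum>p\<in>{p \<in> {..<?L}. s \<le> p}. F p s)"
  proof (rule sum.cong[OF refl])
    fix s assume s: "s \<in> ?S"
    have "{s..<?L} = {p \<in> {..<?L}. s \<le> p}" by auto
    then show "(\<Sum>p\<in>{s..<?L}. wt w x y (bP P1 P2 s) (Suc (Suc p))) = (\<Sum>p\<in>{p \<in> {..<?L}. s \<le> p}. F p s)"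
      using wtB[OF b1 b2 s] F_def cL_def by simp
  qed
  also have "\<dots> = (\<Sum>p\<in>{..<?L}. \<Sum>s\<in>{s \<in> ?S. s \<le> p}. F p s)"
    by (rule sum.swap_restrict) auto
  also have "\<dots> = (\<Sum>p\<in>{..<?L}. (if p \<in> ?S then x * y ^ ?c2 * y ^ cL p else 0)
      + x\<^sup>2 * y ^ ?c2 * (w ^ nat (height P1 p) * y ^ cL p * (\<Sum>k<contact_lt P1 p. x ^ k)))"
  proof (rule sum.cong[OF refl])
    fix p assume p: "p \<in> {..<?L}"
    define Sp where "Sp = {s \<in> ?S. s < p}"
    have fin: "finite Sp" unfolding Sp_def by simp
    have split: "{s \<in> ?S. s \<le> p} = Sp \<union> (if p \<in> ?S then {p} else {})" unfolding Sp_def by (auto simp: le_less)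
    have "(\<Sum>s\<in>Sp. x ^ card {j \<in> ?S. s \<le> j \<and> j < p}) = (\<Sum>s\<in>Sp. (\<lambda>k. x ^ k) (card {t \<in> Sp. s \<le> t}))"
    proof (rule sum.cong[OF refl])
      fix s assume s: "s \<in> Sp"
      have "{t \<in> Sp. s \<le> t} = {j \<in> ?S. s \<le> j \<and> j < p}" unfolding Sp_def by auto
      then show "x ^ card {j \<in> ?S. s \<le> j \<and> j < p} = (\<lambda>k. x ^ k) (card {t \<in> Sp. s \<le> t})" by simp
    qed
    also have "\<dots> = (\<Sum>k\<in>{1..card Sp}. x ^ k)" by (rule sum_card_ge[OF fin])
    also have "\<dots> = x * (\<Sum>k<contact_lt P1 p. x ^ k)" unfolding sum_shift1 clt_Ct Sp_def
      by (simp add: sum_distrib_left)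
    finally have inner: "(\<Sum>s\<in>Sp. x ^ card {j \<in> ?S. s \<le> j \<and> j < p}) = x * (\<Sum>k<contact_lt P1 p. x ^ k)" .
    have pS: "{j \<in> ?S. p \<le> j \<and> j < p} = {}" by auto
    have "(\<Sum>s\<in>{s \<in> ?S. s \<le> p}. F p s) = (\<Sum>s\<in>Sp. F p s) + (if p \<in> ?S then F p p else 0)"
      unfolding split by (subst sum.union_disjoint) (auto simp: fin Sp_def)
    moreover have "(\<Sum>s\<in>Sp. F p s) = w ^ nat (height P1 p) * x * y ^ (cL p + ?c2) * (\<Sum>s\<in>Sp. x ^ card {j \<in> ?S. s \<le> j \<and> j < p})"
      unfolding F_def sum_distrib_left by (simp add: mult_ac)
    moreover have "p \<in> ?S \<Longrightarrow> F p p = x * y ^ ?c2 * y ^ cL p"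
      unfolding F_def using h0[of p] by (simp add: pS power_add mult_ac)
    ultimately show "(\<Sum>s\<in>{s \<in> ?S. s \<le> p}. F p s) = (if p \<in> ?S then x * y ^ ?c2 * y ^ cL p else 0)
      + x\<^sup>2 * y ^ ?c2 * (w ^ nat (height P1 p) * y ^ cL p * (\<Sum>k<contact_lt P1 p. x ^ k))"
      using inner by (simp add: power_add power2_eq_square mult_ac)
  qed
  also have "\<dots> = (\<Sum>p\<in>{..<?L}. (if p \<in> ?S then x * y ^ ?c2 * y ^ cL p else 0))
      + x\<^sup>2 * y ^ ?c2 * T4 w x y"
    unfolding sum.distrib T4_def sum_distrib_left cL_def ..
  also have "(\<Sum>p\<in>{..<?L}. (if p \<in> ?S then x * y ^ ?c2 * y ^ cL p else 0)) =
      x * y ^ ?c2 * (\<Sum>k\<in>{1..card ?S - 1}. y ^ k)"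
  proof -
    define S3 where "S3 = {p \<in> ?S. p < ?L}"
    have fin: "finite S3" unfolding S3_def by simp
    have "(\<Sum>p\<in>{..<?L}. (if p \<in> ?S then x * y ^ ?c2 * y ^ cL p else 0)) = (\<Sum>p\<in>S3. x * y ^ ?c2 * y ^ cL p)"
    proof -
      have "(\<Sum>p\<in>{..<?L}. (if p \<in> ?S then x * y ^ ?c2 * y ^ cL p else 0)) = (\<Sum>p\<in>{p \<in> {..<?L}. p \<in> ?S}. x * y ^ ?c2 * y ^ cL p)"
        by (rule sum.inter_filter[symmetric]) simp
      moreover have "{p \<in> {..<?L}. p \<in> ?S} = S3" unfolding S3_def by auto
      ultimately show ?thesis by simp
    qed
    also have "\<dots> = x * y ^ ?c2 * (\<Sum>p\<in>S3. (\<lambda>k. y ^ k) (card {t \<in> S3. p \<le> t}))"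
    proof -
      have "cL p = card {t \<in> S3. p \<le> t}" for p unfolding cL_def S3_def by (rule arg_cong[where f=card]) auto
      then show ?thesis by (simp add: sum_distrib_left)
    qed
    also have "\<dots> = x * y ^ ?c2 * (\<Sum>k\<in>{1..card S3}. y ^ k)" using sum_card_ge[OF fin] by simp
    also have "card S3 = card ?S - 1" using c1_pos unfolding S3_def by simp
    finally show ?thesis .
  qed
  finally show ?thesis .
qed

lemma Csum: "(\<Sum>s\<in>Ct P1. \<Sum>r\<le>length P2. wt w x y (bP P1 P2 s) (Suc (Suc (length P1)) + r)) =
   (\<Sum>k\<in>{1..card (Ct P1)}. x ^ k) * Gw w x y P2"
proof -
  let ?S = "Ct P1"
  have "(\<Sum>s\<in>?S. \<Sum>r\<le>length P2. wt w x y (bP P1 P2 s) (Suc (Suc (length P1)) + r)) =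
      (\<Sum>s\<in>?S. (\<lambda>k. x ^ k) (card {t \<in> ?S. s \<le> t}) * Gw w x y P2)"
  proof (rule sum.cong[OF refl])
    fix s assume s: "s \<in> ?S"
    have "card {t \<in> ?S. s \<le> t} = Suc (S1 P1 s)" using card_geL[OF CtsubL[OF s]] S1_def[OF b1 b2 s] by simp
    moreover have "{..length P2} = {0..length P2}" by auto
    ultimately show "(\<Sum>r\<le>length P2. wt w x y (bP P1 P2 s) (Suc (Suc (length P1)) + r)) =
      (\<lambda>k. x ^ k) (card {t \<in> ?S. s \<le> t}) * Gw w x y P2"
      unfolding wtC[OF b1 b2 s] Gw_def sum_distrib_left by simp
  qed
  also have "\<dots> = (\<Sum>s\<in>?S. (\<lambda>k. x ^ k) (card {t \<in> ?S. s \<le> t})) * Gw w x y P2"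
    by (simp add: sum_distrib_right)
  also have "\<dots> = (\<Sum>k\<in>{1..card ?S}. x ^ k) * Gw w x y P2" using sum_card_ge[of ?S "\<lambda>k. x ^ k"] by simp
  finally show ?thesis .
qed

lemma id1: "Gw w 1 y P1 - Gw w 1 1 P1 = (y - 1) * T2 w y"
proof -
  have "Gw w 1 y P1 - Gw w 1 1 P1 = (\<Sum>p\<le>length P1. w ^ nat (height P1 p) * (y ^ contact_ge P1 p - 1))"
    unfolding Gw_def wt_def atMost_atLeast0[symmetric] sum_subtractf[symmetric]
    by (rule sum.cong) (auto simp: algebra_simps)
  also have "\<dots> = (y - 1) * T2 w y"
    unfolding T2_def sum_distrib_left power_diff_1_eq by (rule sum.cong) (auto simp: algebra_simps)
  finally show ?thesis .
qed

lemma id3: assumes x0: "x \<noteq> 0"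
  shows "Gw w x y P1 - y / x * x ^ card (Ct P1) - Gw w 1 y P1 + y = (x - 1) * y * T4 w x y"
proof -
  let ?S = "Ct P1" and ?L = "length P1"
  define g where "g p = w ^ nat (height P1 p) * y ^ contact_ge P1 p * (x ^ contact_lt P1 p - 1)" for p
  have "Gw w x y P1 - Gw w 1 y P1 = (\<Sum>p\<le>?L. g p)"
    unfolding Gw_def wt_def g_def atMost_atLeast0[symmetric] sum_subtractf[symmetric]
    by (rule sum.cong) (auto simp: algebra_simps)
  also have "\<dots> = g ?L + (\<Sum>p<?L. g p)"
    unfolding lessThan_Suc_atMost[symmetric] sum.lessThan_Suc by simp
  also have "g ?L = y * (x ^ (card ?S - 1) - 1)"
  proof -
    have "contact_ge P1 ?L = 1"
    proof -
      have "{j \<in> ?S. ?L \<le> j} = {?L}" using CtL CtsubL by fastforce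
      then show ?thesis unfolding cge_Ct by simp
    qed
    moreover have "contact_lt P1 ?L = card ?S - 1" unfolding clt_Ct using c1_pos by simp
    ultimately show ?thesis unfolding g_def using h0[OF CtL] by simp
  qed
  also have "(\<Sum>p<?L. g p) = (x - 1) * y * T4 w x y"
  proof -
    define tt where "tt p = w ^ nat (height P1 p) * y ^ card {j \<in> ?S. p \<le> j \<and> j < ?L} * (\<Sum>k<contact_lt P1 p. x ^ k)" for p
    have pt: "g p = (x - 1) * y * tt p" if p: "p \<in> {..<?L}" for p
    proof -
      have "contact_ge P1 p = Suc (card {j \<in> ?S. p \<le> j \<and> j < ?L})"
        unfolding cge_Ct using card_geL[of p] p by simp
      then show ?thesis unfolding g_def tt_def power_diff_1_eq by (simp add: mult_ac)
    qed
    have "(\<Sum>p<?L. g p) = (\<Sum>p<?L. (x - 1) * y * tt p)" by (rule sum.cong) (simp_all add: pt)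
    also have "\<dots> = (x - 1) * y * (\<Sum>p<?L. tt p)" by (rule sum_distrib_left[symmetric])
    also have "(\<Sum>p<?L. tt p) = T4 w x y" unfolding T4_def tt_def ..
    finally show ?thesis .
  qed
  also have "y / x * x ^ card ?S = y * x ^ (card ?S - 1)"
    using c1_pos x0 by (simp add: field_simps)
  ultimately show ?thesis by (simp add: algebra_simps)
qed

lemma pair_id:
  assumes x0: "x \<noteq> 0" and x1: "x \<noteq> 1" and y0: "y \<noteq> 0" and y1: "y \<noteq> 1"
  shows "(\<Sum>s\<in>Ct P1. Gw w x y (bP P1 P2 s) - y ^ contact (bP P1 P2 s)) =
    x * w / (y - 1) * (Gw w 1 y P1 - Gw w 1 1 P1) * y ^ contact P2
  + x / (y - 1) * (y ^ contact P1 - y) * y ^ contact P2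
  + x\<^sup>2 / (y * (x - 1)) * (Gw w x y P1 - y / x * x ^ contact P1 - Gw w 1 y P1 + y) * y ^ contact P2
  + x / (x - 1) * (x ^ contact P1 - 1) * Gw w x y P2"
proof -
  let ?S = "Ct P1" and ?c1 = "card (Ct P1)" and ?c2 = "card (Ct P2)"
  have "(\<Sum>s\<in>?S. Gw w x y (bP P1 P2 s) - y ^ contact (bP P1 P2 s)) =
     (\<Sum>s\<in>?S. (\<Sum>p\<le>s. wt w x y (bP P1 P2 s) (Suc p))
      + (\<Sum>p\<in>{s..<length P1}. wt w x y (bP P1 P2 s) (Suc (Suc p)))
      + (\<Sum>r\<le>length P2. wt w x y (bP P1 P2 s) (Suc (Suc (length P1)) + r)))"
    by (rule sum.cong[OF refl]) (simp add: GwB[OF b1 b2])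
  also have "\<dots> = x * w * y ^ ?c2 * T2 w y + (x * y ^ ?c2 * (\<Sum>k\<in>{1..?c1 - 1}. y ^ k) + x\<^sup>2 * y ^ ?c2 * T4 w x y)
     + (\<Sum>k\<in>{1..?c1}. x ^ k) * Gw w x y P2"
    unfolding sum.distrib Asum Bsum Csum ..
  finally have L: "(\<Sum>s\<in>?S. Gw w x y (bP P1 P2 s) - y ^ contact (bP P1 P2 s)) =
     x * w * y ^ ?c2 * T2 w y + (x * y ^ ?c2 * (\<Sum>k\<in>{1..?c1 - 1}. y ^ k) + x\<^sup>2 * y ^ ?c2 * T4 w x y)
     + (\<Sum>k\<in>{1..?c1}. x ^ k) * Gw w x y P2" .
  have ym: "y - 1 \<noteq> 0" and xm: "x - 1 \<noteq> 0" using x1 y1 by auto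
  have t1: "x * w / (y - 1) * (Gw w 1 y P1 - Gw w 1 1 P1) * y ^ ?c2 = x * w * y ^ ?c2 * T2 w y"
    unfolding id1 using ym by (simp add: field_simps)
  have g2: "y ^ ?c1 - y = (y - 1) * (\<Sum>k\<in>{1..?c1 - 1}. y ^ k)"
    using geom1[of y "?c1 - 1"] c1_pos by simp
  have t2: "x / (y - 1) * (y ^ ?c1 - y) * y ^ ?c2 = x * y ^ ?c2 * (\<Sum>k\<in>{1..?c1 - 1}. y ^ k)"
    unfolding g2 using ym by (simp add: field_simps)
  have t3: "x\<^sup>2 / (y * (x - 1)) * (Gw w x y P1 - y / x * x ^ ?c1 - Gw w 1 y P1 + y) * y ^ ?c2 = x\<^sup>2 * y ^ ?c2 * T4 w x y"
    unfolding id3[OF x0] using xm y0 by (simp add: field_simps)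
  have g4: "x * (x ^ ?c1 - 1) = (x - 1) * (\<Sum>k\<in>{1..?c1}. x ^ k)"
    using geom1[of x "?c1"] by (simp add: algebra_simps)
  have t4: "x / (x - 1) * (x ^ ?c1 - 1) * Gw w x y P2 = (\<Sum>k\<in>{1..?c1}. x ^ k) * Gw w x y P2"
  proof -
    have "x / (x - 1) * (x ^ ?c1 - 1) = (x * (x ^ ?c1 - 1)) / (x - 1)" by simp
    also have "\<dots> = (\<Sum>k\<in>{1..?c1}. x ^ k)" unfolding g4 using xm by simp
    finally show ?thesis by simp
  qed
  have c: "contact P1 = ?c1" "contact P2 = ?c2" by (simp_all add: contact_Ct)
  show ?thesis unfolding L c t1 t2 t3 t4 by simp
qed

end




lemma memI: "I \<in> intervals n \<Longrightarrow> bal (fst I) \<and> length (fst I) = 2 * n"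
  unfolding intervals_def tamari_le_def dyck_bal by auto

lemma Fn: "F_gf x $ n = (\<Sum>I\<in>intervals n. x ^ contact (fst I))"
  unfolding F_gf_def by (simp add: split_beta)

lemma Gn: "G_gf w x y $ n = (\<Sum>I\<in>intervals n. Gw w x y (fst I))"
  unfolding G_gf_def fps_nth_Abs_fps
proof (rule sum.cong[OF refl])
  fix I assume I: "I \<in> intervals n"
  obtain P Q where PQ: "I = (P, Q)" by (cases I)
  have "length P = 2 * n" using memI[OF I] PQ by simp
  then show "(case I of (P, Q) \<Rightarrow> \<Sum>i = 0..2 * n. w ^ nat (height P i) * x ^ contact_lt P i * y ^ contact_ge P i)
     = Gw w x y (fst I)"
    unfolding PQ Gw_def wt_def by simp
qed

lemma sum_decomp':
  fixes f :: "bool list \<Rightarrow> real"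
  shows "(\<Sum>I\<in>intervals (Suc n). f (fst I)) =
    (\<Sum>k\<le>n. \<Sum>I1\<in>intervals k. \<Sum>I2\<in>intervals (n - k). \<Sum>s\<in>Ct (fst I1). f (bP (fst I1) (fst I2) s))"
  using sum_decomp[of f n] by (simp add: split_beta)

lemma Xterm: "(fps_X * fps_const (c::real) * A * B) $ Suc m = c * (\<Sum>i\<le>m. A $ i * B $ (m - i))"
proof -
  have e1: "fps_X * fps_const c * A * B = fps_X * (fps_const c * (A * B))" by (simp add: mult_ac)
  have e2: "(fps_X * (fps_const c * (A * B))) $ Suc m = (fps_const c * (A * B)) $ m"
    by (subst fps_X_mult_nth) simp
  have e3: "(fps_const c * (A * B)) $ m = c * (A * B) $ m" by (rule fps_mult_left_const_nth)
  have e4: "(A * B) $ m = (\<Sum>i\<le>m. A $ i * B $ (m - i))" unfolding atMost_atLeast0 by (rule fps_mult_nth)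
  show ?thesis by (simp only: e1 e2 e3 e4)
qed

lemma coeff0: "G_gf w x y $ 0 = F_gf y $ 0"
  unfolding Gn Fn
proof (rule sum.cong[OF refl])
  fix I assume "I \<in> intervals 0"
  then have "length (fst I) = 0" using memI by auto
  then show "Gw w x y (fst I) = y ^ contact (fst I)" unfolding Gw_def using wt0 by simp
qed

lemma c1: "(G_gf w 1 y - G_gf w 1 1) $ k = (\<Sum>I\<in>intervals k. Gw w 1 y (fst I) - Gw w 1 1 (fst I))"
  by (simp add: Gn sum_subtractf)

lemma c2: "(F_gf y - fps_const y * F_gf 1) $ k = (\<Sum>I\<in>intervals k. y ^ contact (fst I) - y)"
  by (simp add: Fn sum_subtractf sum_distrib_left)

lemma c3: "(G_gf w x y - fps_const (y / x) * F_gf x - G_gf w 1 y + fps_const y * F_gf 1) $ k =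
  (\<Sum>I\<in>intervals k. Gw w x y (fst I) - y / x * x ^ contact (fst I) - Gw w 1 y (fst I) + y)"
  by (simp add: Gn Fn sum_subtractf sum.distrib sum_distrib_left)

lemma c4: "(F_gf x - F_gf 1) $ k = (\<Sum>I\<in>intervals k. x ^ contact (fst I) - 1)"
  by (simp add: Fn sum_subtractf)

lemma comb:
  fixes f1 f2 f3 f4 g h :: "'a \<Rightarrow> real"
  shows "(\<Sum>i\<in>A. \<Sum>j\<in>B. \<alpha> * (f1 i * g j) + \<beta> * (f2 i * g j) + \<gamma> * (f3 i * g j) + \<delta> * (f4 i * h j)) =
    \<alpha> * (sum f1 A * sum g B) + \<beta> * (sum f2 A * sum g B) + \<gamma> * (sum f3 A * sum g B) + \<delta> * (sum f4 A * sum h B)"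
proof -
  have p: "c * (sum f A * sum g' B) = (\<Sum>i\<in>A. \<Sum>j\<in>B. c * (f i * g' j))" for c and f g' :: "'a \<Rightarrow> real"
    unfolding sum_product by (simp add: sum_distrib_left)
  show ?thesis unfolding p sum.distrib ..
qed

lemma comb2:
  fixes u v z q :: "nat \<Rightarrow> real"
  shows "(\<Sum>k\<in>K. \<alpha> * u k + \<beta> * v k + \<gamma> * z k + \<delta> * q k) =
    \<alpha> * sum u K + \<beta> * sum v K + \<gamma> * sum z K + \<delta> * sum q K"
  by (simp add: sum.distrib sum_distrib_left)

lemma coeffS:
  fixes w x y :: real
  assumes x0: "x \<noteq> 0" and x1: "x \<noteq> 1" and y0: "y \<noteq> 0" and y1: "y \<noteq> 1"
  shows "G_gf w x y $ Suc m = F_gf y $ Suc m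
    + x * w / (y - 1) * (\<Sum>k\<le>m. (G_gf w 1 y - G_gf w 1 1) $ k * F_gf y $ (m - k))
    + x / (y - 1) * (\<Sum>k\<le>m. (F_gf y - fps_const y * F_gf 1) $ k * F_gf y $ (m - k))
    + x\<^sup>2 / (y * (x - 1)) * (\<Sum>k\<le>m. (G_gf w x y - fps_const (y / x) * F_gf x - G_gf w 1 y + fps_const y * F_gf 1) $ k * F_gf y $ (m - k))
    + x / (x - 1) * (\<Sum>k\<le>m. (F_gf x - F_gf 1) $ k * G_gf w x y $ (m - k))"
proof -
  define a1 where "a1 P = Gw w 1 y P - Gw w 1 1 P" for P
  define a2 where "a2 P = y ^ contact P - y" for P
  define a3 where "a3 P = Gw w x y P - y / x * x ^ contact P - Gw w 1 y P + y" for P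
  define a4 where "a4 P = x ^ contact P - 1" for P
  define b where "b P = y ^ contact P" for P
  define b4 where "b4 P = Gw w x y P" for P
  define E where "E P1 P2 = x * w / (y - 1) * a1 P1 * b P2 + x / (y - 1) * a2 P1 * b P2
     + x\<^sup>2 / (y * (x - 1)) * a3 P1 * b P2 + x / (x - 1) * a4 P1 * b4 P2" for P1 P2
  have Eas: "E P1 P2 = x * w / (y - 1) * (a1 P1 * b P2) + x / (y - 1) * (a2 P1 * b P2)
     + x\<^sup>2 / (y * (x - 1)) * (a3 P1 * b P2) + x / (x - 1) * (a4 P1 * b4 P2)" for P1 P2
    unfolding E_def by (simp only: mult.assoc)
  have "G_gf w x y $ Suc m - F_gf y $ Suc m = (\<Sum>I\<in>intervals (Suc m). Gw w x y (fst I) - y ^ contact (fst I))"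
    by (simp add: Gn Fn sum_subtractf)
  also have "\<dots> = (\<Sum>k\<le>m. \<Sum>I1\<in>intervals k. \<Sum>I2\<in>intervals (m - k). \<Sum>s\<in>Ct (fst I1).
      Gw w x y (bP (fst I1) (fst I2) s) - y ^ contact (bP (fst I1) (fst I2) s))"
    by (rule sum_decomp')
  also have "\<dots> = (\<Sum>k\<le>m. \<Sum>I1\<in>intervals k. \<Sum>I2\<in>intervals (m - k). E (fst I1) (fst I2))"
  proof (intro sum.cong refl)
    fix k I1 I2 assume I1: "I1 \<in> intervals k" and I2: "I2 \<in> intervals (m - k)"
    have "bal (fst I1)" "bal (fst I2)" using memI[OF I1] memI[OF I2] by auto
    then show "(\<Sum>s\<in>Ct (fst I1). Gw w x y (bP (fst I1) (fst I2) s) - y ^ contact (bP (fst I1) (fst I2) s)) = E (fst I1) (fst I2)"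
      unfolding E_def a1_def a2_def a3_def a4_def b_def b4_def using pair_id[OF _ _ x0 x1 y0 y1] by blast
  qed
  also have "\<dots> = x * w / (y - 1) * (\<Sum>k\<le>m. (\<Sum>I\<in>intervals k. a1 (fst I)) * (\<Sum>I\<in>intervals (m - k). b (fst I)))
    + x / (y - 1) * (\<Sum>k\<le>m. (\<Sum>I\<in>intervals k. a2 (fst I)) * (\<Sum>I\<in>intervals (m - k). b (fst I)))
    + x\<^sup>2 / (y * (x - 1)) * (\<Sum>k\<le>m. (\<Sum>I\<in>intervals k. a3 (fst I)) * (\<Sum>I\<in>intervals (m - k). b (fst I)))
    + x / (x - 1) * (\<Sum>k\<le>m. (\<Sum>I\<in>intervals k. a4 (fst I)) * (\<Sum>I\<in>intervals (m - k). b4 (fst I)))"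
    unfolding Eas comb comb2 ..
  finally have main: "G_gf w x y $ Suc m - F_gf y $ Suc m = x * w / (y - 1) * (\<Sum>k\<le>m. (\<Sum>I\<in>intervals k. a1 (fst I)) * (\<Sum>I\<in>intervals (m - k). b (fst I)))
    + x / (y - 1) * (\<Sum>k\<le>m. (\<Sum>I\<in>intervals k. a2 (fst I)) * (\<Sum>I\<in>intervals (m - k). b (fst I)))
    + x\<^sup>2 / (y * (x - 1)) * (\<Sum>k\<le>m. (\<Sum>I\<in>intervals k. a3 (fst I)) * (\<Sum>I\<in>intervals (m - k). b (fst I)))
    + x / (x - 1) * (\<Sum>k\<le>m. (\<Sum>I\<in>intervals k. a4 (fst I)) * (\<Sum>I\<in>intervals (m - k). b4 (fst I)))" .
  have r1: "(\<Sum>k\<le>m. (G_gf w 1 y - G_gf w 1 1) $ k * F_gf y $ (m - k)) =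
      (\<Sum>k\<le>m. (\<Sum>I\<in>intervals k. a1 (fst I)) * (\<Sum>I\<in>intervals (m - k). b (fst I)))"
    unfolding c1 Fn a1_def b_def ..
  have r2: "(\<Sum>k\<le>m. (F_gf y - fps_const y * F_gf 1) $ k * F_gf y $ (m - k)) =
      (\<Sum>k\<le>m. (\<Sum>I\<in>intervals k. a2 (fst I)) * (\<Sum>I\<in>intervals (m - k). b (fst I)))"
    unfolding c2 Fn a2_def b_def ..
  have r3: "(\<Sum>k\<le>m. (G_gf w x y - fps_const (y / x) * F_gf x - G_gf w 1 y + fps_const y * F_gf 1) $ k * F_gf y $ (m - k)) =
      (\<Sum>k\<le>m. (\<Sum>I\<in>intervals k. a3 (fst I)) * (\<Sum>I\<in>intervals (m - k). b (fst I)))"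
    unfolding c3 Fn a3_def b_def ..
  have r4: "(\<Sum>k\<le>m. (F_gf x - F_gf 1) $ k * G_gf w x y $ (m - k)) =
      (\<Sum>k\<le>m. (\<Sum>I\<in>intervals k. a4 (fst I)) * (\<Sum>I\<in>intervals (m - k). b4 (fst I)))"
    unfolding c4 Gn a4_def b4_def ..
  show ?thesis unfolding r1 r2 r3 r4 using main by linarith
qed

lemma Xterm0: "(fps_X * fps_const (c::real) * A * B) $ 0 = 0"
proof -
  have e1: "fps_X * fps_const c * A * B = fps_X * (fps_const c * (A * B))" by (simp add: mult_ac)
  show ?thesis unfolding e1 by simp
qed

theorem proposition3p1:
  fixes w x y :: real
  assumes "x \<noteq> 0" "x \<noteq> 1" "y \<noteq> 0" "y \<noteq> 1"
  shows "G_gf w x y =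
      F_gf y
    + fps_X * fps_const (x * w / (y - 1)) * (G_gf w 1 y - G_gf w 1 1) * F_gf y
    + fps_X * fps_const (x / (y - 1)) * (F_gf y - fps_const y * F_gf 1) * F_gf y
    + fps_X * fps_const (x ^ 2 / (y * (x - 1)))
        * (G_gf w x y - fps_const (y / x) * F_gf x - G_gf w 1 y + fps_const y * F_gf 1) * F_gf y
    + fps_X * fps_const (x / (x - 1)) * (F_gf x - F_gf 1) * G_gf w x y"
proof (rule fps_ext)
  fix n
  show "G_gf w x y $ n = (F_gf y
    + fps_X * fps_const (x * w / (y - 1)) * (G_gf w 1 y - G_gf w 1 1) * F_gf y
    + fps_X * fps_const (x / (y - 1)) * (F_gf y - fps_const y * F_gf 1) * F_gf y
    + fps_X * fps_const (x ^ 2 / (y * (x - 1)))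
        * (G_gf w x y - fps_const (y / x) * F_gf x - G_gf w 1 y + fps_const y * F_gf 1) * F_gf y
    + fps_X * fps_const (x / (x - 1)) * (F_gf x - F_gf 1) * G_gf w x y) $ n"
  proof (cases n)
    case 0
    then show ?thesis unfolding fps_add_nth Xterm0 using coeff0 by simp
  next
    case (Suc m)
    show ?thesis unfolding Suc fps_add_nth Xterm using coeffS[OF assms, of w m] by simp
  qed
qed


end
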